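(* The discrete self-adjoint Dirac system $y_{k+1}(z)=(I_m+\mathrm{i} z j C_k)y_k(z)$ $(k\in\mathbb{N}_0)$, whose potential satisfies $C_k>0$, $C_k j C_k=j$, is uniquely recovered (i.e., the sequence $\{C_k\}$ is uniquely determined) from its Weyl function $\varphi(z)$, $z\in\mathbb{C}_-$.
   Context: Let $j=\mathrm{diag}\{I_{m_1},-I_{m_2}\}$ with $m_1+m_2=m$, $m_1,m_2\neq 0$. Consider the discrete self-adjoint Dirac system $y_{k+1}(z)=(I_m+\mathrm{i} z j C_k)y_k(z)$, $k\in\mathbb{N}_0$, where the $m\times m$ matrices $C_k$ satisfy $C_k>0$ and $C_k j C_k=j$. Let $\{W_k(z)\}$ be its fundamental solution normalized by $W_0(z)=I_m$, and let $q(z)=(1+|z|^2)^{-1}$. The Weyl function of the system is the $m_1\times m_2$ matrix function $\varphi(z)$ on the lower half-plane $\mathbb{C}_-$ such that $\sum_{k=0}^\infty q(z)^k \begin{bmatrix}\varphi(z)^* & I_{m_2}\end{bmatrix} W_k(z)^* C_k W_k(z)\begin{bmatrix}\varphi(z)\\ I_{m_2}\end{bmatrix}<\infty$ for $z\in\mathbb{C}_-$. (Such a Weyl function exists, is unique, and is analytic and contractive on $\mathbb{C}_-$.) *)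

theory Defs
  imports Complex_Main "Jordan_Normal_Form.Matrix"
begin

definition cadj :: "complex mat \<Rightarrow> complex mat" where
  "cadj A = mat (dim_col A) (dim_row A) (\<lambda>(i,k). cnj (A $$ (k,i)))"

definition pos_def_mat :: "nat \<Rightarrow> complex mat \<Rightarrow> bool" where
  "pos_def_mat n C \<longleftrightarrow> C \<in> carrier_mat n n \<and> cadj C = C \<and>
     (\<forall>v \<in> carrier_vec n. v \<noteq> 0\<^sub>v n \<longrightarrow>
        0 < Re (\<Sum>i<n. cnj (v $ i) * (C *\<^sub>v v) $ i))"

definition jmat :: "nat \<Rightarrow> nat \<Rightarrow> complex mat" where
  "jmat m1 m2 = four_block_mat (1\<^sub>m m1) (0\<^sub>m m1 m2) (0\<^sub>m m2 m1) (- 1\<^sub>m m2)"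

definition dirac_potential :: "nat \<Rightarrow> nat \<Rightarrow> (nat \<Rightarrow> complex mat) \<Rightarrow> bool" where
  "dirac_potential m1 m2 C \<longleftrightarrow>
     (\<forall>k. pos_def_mat (m1 + m2) (C k) \<and> C k * jmat m1 m2 * C k = jmat m1 m2)"

fun fund_sol :: "nat \<Rightarrow> nat \<Rightarrow> (nat \<Rightarrow> complex mat) \<Rightarrow> complex \<Rightarrow> nat \<Rightarrow> complex mat" where
  "fund_sol m1 m2 C z 0 = 1\<^sub>m (m1 + m2)"
| "fund_sol m1 m2 C z (Suc k) =
     (1\<^sub>m (m1 + m2) + (\<i> * z) \<cdot>\<^sub>m (jmat m1 m2 * C k)) * fund_sol m1 m2 C z k"

definition qfun :: "complex \<Rightarrow> real" where
  "qfun z = 1 / (1 + (cmod z)\<^sup>2)"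

text \<open>The k-th summand q(z)^k [phi^* I] W_k^* C_k W_k [phi; I] (an m2 x m2 matrix).\<close>
definition weyl_term :: "nat \<Rightarrow> nat \<Rightarrow> (nat \<Rightarrow> complex mat) \<Rightarrow> complex mat \<Rightarrow> complex \<Rightarrow> nat \<Rightarrow> complex mat" where
  "weyl_term m1 m2 C \<phi> z k =
     (let P = four_block_mat \<phi> (0\<^sub>m m1 0) (1\<^sub>m m2) (0\<^sub>m m2 0);
          W = fund_sol m1 m2 C z k
      in complex_of_real (qfun z ^ k) \<cdot>\<^sub>m (cadj P * cadj W * C k * W * P))"

definition is_weyl_function :: "nat \<Rightarrow> nat \<Rightarrow> (nat \<Rightarrow> complex mat) \<Rightarrow> (complex \<Rightarrow> complex mat) \<Rightarrow> bool" where
  "is_weyl_function m1 m2 C \<phi> \<longleftrightarrow>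
     (\<forall>z. Im z < 0 \<longrightarrow> \<phi> z \<in> carrier_mat m1 m2 \<and>
        (\<forall>a < m2. \<forall>b < m2. summable (\<lambda>k. weyl_term m1 m2 C (\<phi> z) z k $$ (a, b))))"

end

theory Submission
  imports Defs "Jordan_Normal_Form.Determinant"
begin

definition ip :: "complex vec \<Rightarrow> complex vec \<Rightarrow> complex" where
  "ip u v = (\<Sum>i<dim_vec u. cnj (u$i) * v$i)"

lemma scalar_prod_lessThan: "u \<bullet> v = (\<Sum>i<dim_vec v. u$i * v$i)"
  unfolding scalar_prod_def by (simp add: lessThan_atLeast0)

lemma ip_add_right: "u \<in> carrier_vec n \<Longrightarrow> v \<in> carrier_vec n \<Longrightarrow> w \<in> carrier_vec n \<Longrightarrow>
  ip u (v + w) = ip u v + ip u w"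
  unfolding ip_def by (simp add: distrib_left sum.distrib)

lemma ip_add_left: "u \<in> carrier_vec n \<Longrightarrow> v \<in> carrier_vec n \<Longrightarrow> w \<in> carrier_vec n \<Longrightarrow>
  ip (u + v) w = ip u w + ip v w"
  unfolding ip_def by (simp add: distrib_right sum.distrib)

lemma ip_minus_right: "u \<in> carrier_vec n \<Longrightarrow> v \<in> carrier_vec n \<Longrightarrow> w \<in> carrier_vec n \<Longrightarrow>
  ip u (v - w) = ip u v - ip u w"
  unfolding ip_def by (simp add: right_diff_distrib sum_subtractf)

lemma ip_minus_left: "u \<in> carrier_vec n \<Longrightarrow> v \<in> carrier_vec n \<Longrightarrow> w \<in> carrier_vec n \<Longrightarrow>
  ip (u - v) w = ip u w - ip v w"
  unfolding ip_def by (simp add: left_diff_distrib sum_subtractf)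

lemma ip_smult_right: "ip u (c \<cdot>\<^sub>v v) = c * ip u v" if "dim_vec v = dim_vec u"
  using that unfolding ip_def by (simp add: sum_distrib_left ac_simps)

lemma ip_smult_left: "ip (c \<cdot>\<^sub>v u) v = cnj c * ip u v"
  unfolding ip_def by (simp add: sum_distrib_left ac_simps)

lemma ip_cnj: "dim_vec u = dim_vec v \<Longrightarrow> cnj (ip u v) = ip v u"
  unfolding ip_def by (simp add: ac_simps)

lemma ip_zero_right: "ip u (0\<^sub>v (dim_vec u)) = 0"
  unfolding ip_def by simp

lemma ip_zero_left: "ip (0\<^sub>v n) u = 0"
  unfolding ip_def by simp

lemma ip_self: "ip u u = complex_of_real (\<Sum>i<dim_vec u. (cmod (u$i))\<^sup>2)"
proof -
  have "\<And>z. cnj z * z = complex_of_real ((cmod z)\<^sup>2)"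
    by (subst complex_norm_square) (simp add: mult.commute)
  then show ?thesis unfolding ip_def of_real_sum by simp
qed

lemma ip_self_Re: "Re (ip u u) = (\<Sum>i<dim_vec u. (cmod (u$i))\<^sup>2)"
  by (simp add: ip_self)

lemma ip_self_zero: assumes "Re (ip u u) \<le> 0" shows "u = 0\<^sub>v (dim_vec u)"
proof -
  have "(\<Sum>i<dim_vec u. (cmod (u$i))\<^sup>2) = 0"
    using assms ip_self_Re[of u] by (smt (verit) sum_nonneg zero_le_power2)
  then have "\<forall>i\<in>{..<dim_vec u}. (cmod (u$i))\<^sup>2 = 0"
    by (subst sum_nonneg_eq_0_iff[symmetric]) auto
  then show ?thesis by (intro eq_vecI) auto
qed

lemma index_cadj[simp]: "i < dim_col A \<Longrightarrow> k < dim_row A \<Longrightarrow> cadj A $$ (i,k) = cnj (A $$ (k,i))"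
  unfolding cadj_def by simp

lemma dim_cadj[simp]: "dim_row (cadj A) = dim_col A" "dim_col (cadj A) = dim_row A"
  unfolding cadj_def by auto

lemma cadj_carrier[simp]: "A \<in> carrier_mat n k \<Longrightarrow> cadj A \<in> carrier_mat k n"
  unfolding carrier_mat_def by auto

lemma cadj_cadj[simp]: "cadj (cadj A) = A"
  by (intro eq_matI) auto

lemma ip_adj: assumes A: "A \<in> carrier_mat n k" and u: "u \<in> carrier_vec n" and v: "v \<in> carrier_vec k"
  shows "ip u (A *\<^sub>v v) = ip (cadj A *\<^sub>v u) v"
proof -
  have "ip u (A *\<^sub>v v) = (\<Sum>i<n. cnj (u$i) * (\<Sum>j<k. A$$(i,j) * v$j))"
    unfolding ip_def using A u v by (simp add: scalar_prod_lessThan)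
  also have "\<dots> = (\<Sum>i<n. \<Sum>j<k. cnj (u$i) * A$$(i,j) * v$j)"
    by (simp add: sum_distrib_left ac_simps)
  also have "\<dots> = (\<Sum>j<k. \<Sum>i<n. cnj (u$i) * A$$(i,j) * v$j)"
    by (rule sum.swap)
  also have "\<dots> = (\<Sum>j<k. (\<Sum>i<n. cnj (u$i) * A$$(i,j)) * v$j)"
    by (simp add: sum_distrib_right)
  also have "\<dots> = (\<Sum>j<k. cnj (\<Sum>i<n. cnj (A$$(i,j)) * u$i) * v$j)"
    by (simp add: mult.commute)
  also have "\<dots> = ip (cadj A *\<^sub>v u) v"
    unfolding ip_def using A u v by (simp add: scalar_prod_lessThan)
  finally show ?thesis .
qed

lemma ip_herm: assumes A: "A \<in> carrier_mat n n" "cadj A = A" and u: "u \<in> carrier_vec n" and v: "v \<in> carrier_vec n"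
  shows "ip u (A *\<^sub>v v) = ip (A *\<^sub>v u) v"
  using ip_adj[OF A(1) u v] A(2) by simp

lemma ip_herm_real: assumes A: "A \<in> carrier_mat n n" "cadj A = A" and u: "u \<in> carrier_vec n"
  shows "cnj (ip u (A *\<^sub>v u)) = ip u (A *\<^sub>v u)"
  using ip_cnj[of u "A *\<^sub>v u"] ip_herm[OF A u u] A u by simp

lemma mv_carrier: "A \<in> carrier_mat n k \<Longrightarrow> A *\<^sub>v v \<in> carrier_vec n"
  unfolding carrier_vec_def carrier_mat_def by simp

lemma jmat_carrier: "jmat m1 m2 \<in> carrier_mat (m1+m2) (m1+m2)"
  by (simp add: jmat_def)

lemma jmat_index: "i < m1+m2 \<Longrightarrow> k < m1+m2 \<Longrightarrow>
  jmat m1 m2 $$ (i,k) = (if i = k then (if i < m1 then 1 else -1) else 0)"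
  unfolding jmat_def by (auto simp: index_mat_four_block)

lemma jmat_dims[simp]: "dim_row (jmat m1 m2) = m1+m2" "dim_col (jmat m1 m2) = m1+m2"
  by (simp_all add: jmat_def)

lemma cadj_jmat[simp]: "cadj (jmat m1 m2) = jmat m1 m2"
  by (intro eq_matI) (auto simp: jmat_index)

lemma jmat_vec: assumes "v \<in> carrier_vec (m1+m2)" "i < m1+m2"
  shows "(jmat m1 m2 *\<^sub>v v) $ i = (if i < m1 then v$i else - v$i)"
proof -
  have "(jmat m1 m2 *\<^sub>v v) $ i = row (jmat m1 m2) i \<bullet> v"
    using assms by simp
  also have "\<dots> = (\<Sum>k<m1+m2. jmat m1 m2 $$ (i,k) * v$k)"
    unfolding scalar_prod_lessThan using assms by simp
  also have "\<dots> = (\<Sum>k<m1+m2. (if k = i then (if i < m1 then v$i else - v$i) else 0))"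
    by (rule sum.cong) (use assms in \<open>auto simp: jmat_index\<close>)
  also have "\<dots> = (if i < m1 then v$i else - v$i)"
    using assms by (simp add: sum.delta')
  finally show ?thesis .
qed

lemma jmat_jmat_vec: assumes "v \<in> carrier_vec (m1+m2)"
  shows "jmat m1 m2 *\<^sub>v (jmat m1 m2 *\<^sub>v v) = v"
proof (rule eq_vecI)
  fix i assume i: "i < dim_vec v"
  have w: "jmat m1 m2 *\<^sub>v v \<in> carrier_vec (m1+m2)" by (rule mv_carrier[OF jmat_carrier])
  have i': "i < m1+m2" using i assms by simp
  note e1 = jmat_vec[OF w i'] and e2 = jmat_vec[OF assms i']
  show "(jmat m1 m2 *\<^sub>v (jmat m1 m2 *\<^sub>v v)) $ i = v $ i"
    unfolding e1 e2 by simp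
qed (use assms in simp)

lemma smult_mat_mult_vec: assumes "A \<in> carrier_mat n k" "v \<in> carrier_vec k"
  shows "(c \<cdot>\<^sub>m A) *\<^sub>v v = c \<cdot>\<^sub>v (A *\<^sub>v v)"
proof (rule eq_vecI)
  fix i assume i: "i < dim_vec (c \<cdot>\<^sub>v (A *\<^sub>v v))"
  then have i': "i < n" using assms by simp
  have "((c \<cdot>\<^sub>m A) *\<^sub>v v) $ i = (\<Sum>j<k. (c * A $$ (i,j)) * v$j)"
    using assms i' by (simp add: scalar_prod_lessThan)
  also have "\<dots> = c * (\<Sum>j<k. A $$ (i,j) * v$j)"
    by (simp add: sum_distrib_left ac_simps)
  also have "\<dots> = (c \<cdot>\<^sub>v (A *\<^sub>v v)) $ i"
    using assms i' by (simp add: scalar_prod_lessThan)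
  finally show "((c \<cdot>\<^sub>m A) *\<^sub>v v) $ i = (c \<cdot>\<^sub>v (A *\<^sub>v v)) $ i" .
qed (use assms in simp)

lemma mv_zero: "A \<in> carrier_mat n k \<Longrightarrow> A *\<^sub>v 0\<^sub>v k = 0\<^sub>v n"
  by auto

definition pdj :: "nat \<Rightarrow> nat \<Rightarrow> complex mat \<Rightarrow> bool" where
  "pdj m1 m2 D \<longleftrightarrow> D \<in> carrier_mat (m1+m2) (m1+m2) \<and> cadj D = D \<and>
     (\<forall>v \<in> carrier_vec (m1+m2). v \<noteq> 0\<^sub>v (m1+m2) \<longrightarrow> 0 < Re (ip v (D *\<^sub>v v))) \<and>
     D * jmat m1 m2 * D = jmat m1 m2"

lemma dirac_pdj: "dirac_potential m1 m2 C \<Longrightarrow> pdj m1 m2 (C k)"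
  unfolding dirac_potential_def pdj_def pos_def_mat_def ip_def by auto

lemma dirac_shift: "dirac_potential m1 m2 C \<Longrightarrow> dirac_potential m1 m2 (\<lambda>k. C (n + k))"
  unfolding dirac_potential_def by auto

context
  fixes m1 m2 :: nat and D :: "complex mat"
  assumes D: "pdj m1 m2 D"
begin

lemma D_carrier: "D \<in> carrier_mat (m1+m2) (m1+m2)" using D unfolding pdj_def by auto
lemma D_herm: "cadj D = D" using D unfolding pdj_def by auto
lemma D_pos: "v \<in> carrier_vec (m1+m2) \<Longrightarrow> v \<noteq> 0\<^sub>v (m1+m2) \<Longrightarrow> 0 < Re (ip v (D *\<^sub>v v))"
  using D unfolding pdj_def by auto
lemma D_nonneg: assumes "v \<in> carrier_vec (m1+m2)" shows "0 \<le> Re (ip v (D *\<^sub>v v))"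
proof (cases "v = 0\<^sub>v (m1+m2)")
  case True then show ?thesis by (simp add: ip_zero_left)
next
  case False then show ?thesis using D_pos[OF assms] by simp
qed
lemma D_zero: assumes "v \<in> carrier_vec (m1+m2)" "Re (ip v (D *\<^sub>v v)) \<le> 0" shows "v = 0\<^sub>v (m1+m2)"
  using D_pos[OF assms(1)] assms(2) by force

lemma Dv_carrier: "D *\<^sub>v v \<in> carrier_vec (m1+m2)" by (rule mv_carrier[OF D_carrier])
lemma Jv_carrier: "jmat m1 m2 *\<^sub>v v \<in> carrier_vec (m1+m2)" by (rule mv_carrier[OF jmat_carrier])

lemma DJD_vec: assumes v: "v \<in> carrier_vec (m1+m2)"
  shows "D *\<^sub>v (jmat m1 m2 *\<^sub>v (D *\<^sub>v v)) = jmat m1 m2 *\<^sub>v v"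
proof -
  have DJ: "D * jmat m1 m2 \<in> carrier_mat (m1+m2) (m1+m2)"
    using D_carrier jmat_carrier by (rule mult_carrier_mat)
  have "(D * jmat m1 m2 * D) *\<^sub>v v = jmat m1 m2 *\<^sub>v v" using D unfolding pdj_def by auto
  moreover have "(D * jmat m1 m2 * D) *\<^sub>v v = (D * jmat m1 m2) *\<^sub>v (D *\<^sub>v v)"
    by (rule assoc_mult_mat_vec[OF DJ D_carrier v])
  moreover have "(D * jmat m1 m2) *\<^sub>v (D *\<^sub>v v) = D *\<^sub>v (jmat m1 m2 *\<^sub>v (D *\<^sub>v v))"
    by (rule assoc_mult_mat_vec[OF D_carrier jmat_carrier Dv_carrier])
  ultimately show ?thesis by simp
qed

lemma ipD: "u \<in> carrier_vec (m1+m2) \<Longrightarrow> w \<in> carrier_vec (m1+m2) \<Longrightarrow> ip (D *\<^sub>v u) w = ip u (D *\<^sub>v w)"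
  using ip_herm[OF D_carrier D_herm] by simp
lemma ipJ: "u \<in> carrier_vec (m1+m2) \<Longrightarrow> w \<in> carrier_vec (m1+m2) \<Longrightarrow> ip (jmat m1 m2 *\<^sub>v u) w = ip u (jmat m1 m2 *\<^sub>v w)"
  using ip_herm[OF jmat_carrier cadj_jmat] by simp

lemma key_P_R: assumes u: "u \<in> carrier_vec (m1+m2)"
  shows "ip (jmat m1 m2 *\<^sub>v (D *\<^sub>v u)) (jmat m1 m2 *\<^sub>v u) = ip u (D *\<^sub>v u)"
    "ip (jmat m1 m2 *\<^sub>v (D *\<^sub>v u)) (D *\<^sub>v u) = ip u (jmat m1 m2 *\<^sub>v u)"
    "ip (jmat m1 m2 *\<^sub>v (jmat m1 m2 *\<^sub>v u)) (D *\<^sub>v u) = ip u (D *\<^sub>v u)"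
    "ip (jmat m1 m2 *\<^sub>v (jmat m1 m2 *\<^sub>v u)) (jmat m1 m2 *\<^sub>v u) = ip u (jmat m1 m2 *\<^sub>v u)"
proof -
  show "ip (jmat m1 m2 *\<^sub>v (D *\<^sub>v u)) (jmat m1 m2 *\<^sub>v u) = ip u (D *\<^sub>v u)"
    using ipJ[OF Dv_carrier Jv_carrier] jmat_jmat_vec[OF u] ipD[OF u u] by simp
  show "ip (jmat m1 m2 *\<^sub>v (D *\<^sub>v u)) (D *\<^sub>v u) = ip u (jmat m1 m2 *\<^sub>v u)"
    using ipJ[OF Dv_carrier Dv_carrier] ipD[OF u Jv_carrier] DJD_vec[OF u] by simp
  show "ip (jmat m1 m2 *\<^sub>v (jmat m1 m2 *\<^sub>v u)) (D *\<^sub>v u) = ip u (D *\<^sub>v u)"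
    using jmat_jmat_vec[OF u] by simp
  show "ip (jmat m1 m2 *\<^sub>v (jmat m1 m2 *\<^sub>v u)) (jmat m1 m2 *\<^sub>v u) = ip u (jmat m1 m2 *\<^sub>v u)"
    using jmat_jmat_vec[OF u] by simp
qed

lemma QM: assumes u: "u \<in> carrier_vec (m1+m2)"
  shows "ip (jmat m1 m2 *\<^sub>v (D *\<^sub>v u - jmat m1 m2 *\<^sub>v u)) (D *\<^sub>v (jmat m1 m2 *\<^sub>v (D *\<^sub>v u - jmat m1 m2 *\<^sub>v u)))
     = 2 * (ip u (D *\<^sub>v u) - ip u (jmat m1 m2 *\<^sub>v u))"
proof -
  let ?J = "jmat m1 m2"
  define a where "a = D *\<^sub>v u"
  define b where "b = ?J *\<^sub>v u"
  have a: "a \<in> carrier_vec (m1+m2)" unfolding a_def by (rule Dv_carrier)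
  have b: "b \<in> carrier_vec (m1+m2)" unfolding b_def by (rule Jv_carrier)
  have Ja: "?J *\<^sub>v a \<in> carrier_vec (m1+m2)" by (rule Jv_carrier)
  have Jb: "?J *\<^sub>v b \<in> carrier_vec (m1+m2)" by (rule Jv_carrier)
  have ba: "b - a \<in> carrier_vec (m1+m2)" using a b by simp
  have e1: "?J *\<^sub>v (a - b) = ?J *\<^sub>v a - ?J *\<^sub>v b"
    by (rule mult_minus_distrib_mat_vec[OF jmat_carrier a b])
  have e2: "D *\<^sub>v (?J *\<^sub>v a - ?J *\<^sub>v b) = D *\<^sub>v (?J *\<^sub>v a) - D *\<^sub>v (?J *\<^sub>v b)"
    by (rule mult_minus_distrib_mat_vec[OF D_carrier Ja Jb])
  have e3: "D *\<^sub>v (?J *\<^sub>v a) = b" unfolding a_def b_def by (rule DJD_vec[OF u])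
  have e4: "D *\<^sub>v (?J *\<^sub>v b) = a" unfolding a_def b_def using jmat_jmat_vec[OF u] by simp
  have "ip (?J *\<^sub>v (a - b)) (D *\<^sub>v (?J *\<^sub>v (a - b))) = ip (?J *\<^sub>v a - ?J *\<^sub>v b) (b - a)"
    unfolding e1 e2 e3 e4 ..
  also have "\<dots> = ip (?J *\<^sub>v a) (b - a) - ip (?J *\<^sub>v b) (b - a)"
    by (rule ip_minus_left[OF Ja Jb ba])
  also have "\<dots> = (ip (?J *\<^sub>v a) b - ip (?J *\<^sub>v a) a) - (ip (?J *\<^sub>v b) b - ip (?J *\<^sub>v b) a)"
    unfolding ip_minus_right[OF Ja b a] ip_minus_right[OF Jb b a] ..
  also have "\<dots> = (ip u a - ip u b) - (ip u b - ip u a)"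
    unfolding a_def b_def key_P_R[OF u] ..
  finally show ?thesis unfolding a_def b_def by simp
qed

lemma QP: assumes u: "u \<in> carrier_vec (m1+m2)"
  shows "ip (jmat m1 m2 *\<^sub>v (D *\<^sub>v u + jmat m1 m2 *\<^sub>v u)) (D *\<^sub>v (jmat m1 m2 *\<^sub>v (D *\<^sub>v u + jmat m1 m2 *\<^sub>v u)))
     = 2 * (ip u (D *\<^sub>v u) + ip u (jmat m1 m2 *\<^sub>v u))"
proof -
  let ?J = "jmat m1 m2"
  define a where "a = D *\<^sub>v u"
  define b where "b = ?J *\<^sub>v u"
  have a: "a \<in> carrier_vec (m1+m2)" unfolding a_def by (rule Dv_carrier)
  have b: "b \<in> carrier_vec (m1+m2)" unfolding b_def by (rule Jv_carrier)
  have Ja: "?J *\<^sub>v a \<in> carrier_vec (m1+m2)" by (rule Jv_carrier)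
  have Jb: "?J *\<^sub>v b \<in> carrier_vec (m1+m2)" by (rule Jv_carrier)
  have ba: "b + a \<in> carrier_vec (m1+m2)" using a b by simp
  have e1: "?J *\<^sub>v (a + b) = ?J *\<^sub>v a + ?J *\<^sub>v b"
    by (rule mult_add_distrib_mat_vec[OF jmat_carrier a b])
  have e2: "D *\<^sub>v (?J *\<^sub>v a + ?J *\<^sub>v b) = D *\<^sub>v (?J *\<^sub>v a) + D *\<^sub>v (?J *\<^sub>v b)"
    by (rule mult_add_distrib_mat_vec[OF D_carrier Ja Jb])
  have e3: "D *\<^sub>v (?J *\<^sub>v a) = b" unfolding a_def b_def by (rule DJD_vec[OF u])
  have e4: "D *\<^sub>v (?J *\<^sub>v b) = a" unfolding a_def b_def using jmat_jmat_vec[OF u] by simp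
  have "ip (?J *\<^sub>v (a + b)) (D *\<^sub>v (?J *\<^sub>v (a + b))) = ip (?J *\<^sub>v a + ?J *\<^sub>v b) (b + a)"
    unfolding e1 e2 e3 e4 ..
  also have "\<dots> = ip (?J *\<^sub>v a) (b + a) + ip (?J *\<^sub>v b) (b + a)"
    by (rule ip_add_left[OF Ja Jb ba])
  also have "\<dots> = (ip (?J *\<^sub>v a) b + ip (?J *\<^sub>v a) a) + (ip (?J *\<^sub>v b) b + ip (?J *\<^sub>v b) a)"
    unfolding ip_add_right[OF Ja b a] ip_add_right[OF Jb b a] ..
  also have "\<dots> = (ip u a + ip u b) + (ip u b + ip u a)"
    unfolding a_def b_def key_P_R[OF u] ..
  finally show ?thesis unfolding a_def b_def by simp
qed

lemma QM_nonneg: assumes u: "u \<in> carrier_vec (m1+m2)"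
  shows "Re (ip u (jmat m1 m2 *\<^sub>v u)) \<le> Re (ip u (D *\<^sub>v u))"
proof -
  have "0 \<le> Re (ip (jmat m1 m2 *\<^sub>v (D *\<^sub>v u - jmat m1 m2 *\<^sub>v u)) (D *\<^sub>v (jmat m1 m2 *\<^sub>v (D *\<^sub>v u - jmat m1 m2 *\<^sub>v u))))"
    by (rule D_nonneg[OF Jv_carrier])
  then show ?thesis unfolding QM[OF u] by simp
qed

lemma QP_nonneg: assumes u: "u \<in> carrier_vec (m1+m2)"
  shows "0 \<le> Re (ip u (D *\<^sub>v u)) + Re (ip u (jmat m1 m2 *\<^sub>v u))"
proof -
  have "0 \<le> Re (ip (jmat m1 m2 *\<^sub>v (D *\<^sub>v u + jmat m1 m2 *\<^sub>v u)) (D *\<^sub>v (jmat m1 m2 *\<^sub>v (D *\<^sub>v u + jmat m1 m2 *\<^sub>v u))))"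
    by (rule D_nonneg[OF Jv_carrier])
  then show ?thesis unfolding QP[OF u] by simp
qed

lemma QP_zero: assumes u: "u \<in> carrier_vec (m1+m2)"
  and le: "Re (ip u (D *\<^sub>v u)) + Re (ip u (jmat m1 m2 *\<^sub>v u)) \<le> 0"
  shows "D *\<^sub>v u + jmat m1 m2 *\<^sub>v u = 0\<^sub>v (m1+m2)"
proof -
  let ?y = "D *\<^sub>v u + jmat m1 m2 *\<^sub>v u"
  have y: "?y \<in> carrier_vec (m1+m2)" using Dv_carrier Jv_carrier by simp
  have "Re (ip (jmat m1 m2 *\<^sub>v ?y) (D *\<^sub>v (jmat m1 m2 *\<^sub>v ?y))) \<le> 0"
    unfolding QP[OF u] using le by simp
  then have "jmat m1 m2 *\<^sub>v ?y = 0\<^sub>v (m1+m2)" by (rule D_zero[OF Jv_carrier])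
  then have "jmat m1 m2 *\<^sub>v (jmat m1 m2 *\<^sub>v ?y) = jmat m1 m2 *\<^sub>v 0\<^sub>v (m1+m2)" by simp
  then show ?thesis unfolding jmat_jmat_vec[OF y] mv_zero[OF jmat_carrier] .
qed

lemma step_ip: assumes u: "u \<in> carrier_vec (m1+m2)"
  shows "ip (u + c \<cdot>\<^sub>v (jmat m1 m2 *\<^sub>v (D *\<^sub>v u))) (jmat m1 m2 *\<^sub>v (u + c \<cdot>\<^sub>v (jmat m1 m2 *\<^sub>v (D *\<^sub>v u))))
    = (1 + cnj c * c) * ip u (jmat m1 m2 *\<^sub>v u) + (c + cnj c) * ip u (D *\<^sub>v u)"
proof -
  let ?J = "jmat m1 m2"
  define a where "a = D *\<^sub>v u"
  define b where "b = ?J *\<^sub>v u"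
  have a: "a \<in> carrier_vec (m1+m2)" unfolding a_def by (rule Dv_carrier)
  have b: "b \<in> carrier_vec (m1+m2)" unfolding b_def by (rule Jv_carrier)
  have Ja: "?J *\<^sub>v a \<in> carrier_vec (m1+m2)" by (rule Jv_carrier)
  have cJa: "c \<cdot>\<^sub>v (?J *\<^sub>v a) \<in> carrier_vec (m1+m2)" using Ja by simp
  have ca: "c \<cdot>\<^sub>v a \<in> carrier_vec (m1+m2)" using a by simp
  have e1: "?J *\<^sub>v (u + c \<cdot>\<^sub>v (?J *\<^sub>v a)) = b + c \<cdot>\<^sub>v a"
    unfolding mult_add_distrib_mat_vec[OF jmat_carrier u cJa] mult_mat_vec[OF jmat_carrier Ja]
      jmat_jmat_vec[OF a] b_def ..
  have "ip (u + c \<cdot>\<^sub>v (?J *\<^sub>v a)) (?J *\<^sub>v (u + c \<cdot>\<^sub>v (?J *\<^sub>v a)))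
      = ip (u + c \<cdot>\<^sub>v (?J *\<^sub>v a)) (b + c \<cdot>\<^sub>v a)" unfolding e1 ..
  also have "\<dots> = ip u (b + c \<cdot>\<^sub>v a) + ip (c \<cdot>\<^sub>v (?J *\<^sub>v a)) (b + c \<cdot>\<^sub>v a)"
    by (rule ip_add_left[OF u cJa]) (use b ca in simp)
  also have "\<dots> = (ip u b + ip u (c \<cdot>\<^sub>v a)) + (ip (c \<cdot>\<^sub>v (?J *\<^sub>v a)) b + ip (c \<cdot>\<^sub>v (?J *\<^sub>v a)) (c \<cdot>\<^sub>v a))"
    unfolding ip_add_right[OF u b ca] ip_add_right[OF cJa b ca] ..
  also have "\<dots> = (ip u b + c * ip u a) + (cnj c * ip (?J *\<^sub>v a) b + cnj c * (c * ip (?J *\<^sub>v a) a))"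
    using u a b Ja by (simp add: ip_smult_left ip_smult_right)
  also have "\<dots> = (ip u b + c * ip u a) + (cnj c * ip u a + cnj c * (c * ip u b))"
    unfolding a_def b_def key_P_R[OF u] ..
  finally show ?thesis unfolding a_def b_def by (simp add: algebra_simps)
qed

end

lemma step_mat_carrier: "C \<in> carrier_mat (m1+m2) (m1+m2) \<Longrightarrow>
  1\<^sub>m (m1+m2) + c \<cdot>\<^sub>m (jmat m1 m2 * C) \<in> carrier_mat (m1+m2) (m1+m2)"
  using jmat_carrier[of m1 m2] by auto

lemma fs_carrier: assumes "\<And>k. C k \<in> carrier_mat (m1+m2) (m1+m2)"
  shows "fund_sol m1 m2 C z k \<in> carrier_mat (m1+m2) (m1+m2)"
proof (induction k)
  case 0 then show ?case by simp
next
  case (Suc k)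
  then show ?case using mult_carrier_mat[OF step_mat_carrier[OF assms[of k]] Suc.IH] by simp
qed

lemma dirac_carrier: "dirac_potential m1 m2 C \<Longrightarrow> C k \<in> carrier_mat (m1+m2) (m1+m2)"
  using D_carrier[OF dirac_pdj] by blast

lemma fsv_carrier: "dirac_potential m1 m2 C \<Longrightarrow> fund_sol m1 m2 C z k *\<^sub>v w \<in> carrier_vec (m1+m2)"
  by (rule mv_carrier[OF fs_carrier[OF dirac_carrier]])

lemma step_mat_vec: assumes C: "C \<in> carrier_mat (m1+m2) (m1+m2)" and v: "v \<in> carrier_vec (m1+m2)"
  shows "(1\<^sub>m (m1+m2) + c \<cdot>\<^sub>m (jmat m1 m2 * C)) *\<^sub>v v = v + c \<cdot>\<^sub>v (jmat m1 m2 *\<^sub>v (C *\<^sub>v v))"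
proof -
  have JC: "jmat m1 m2 * C \<in> carrier_mat (m1+m2) (m1+m2)" using jmat_carrier C by (rule mult_carrier_mat)
  have cJC: "c \<cdot>\<^sub>m (jmat m1 m2 * C) \<in> carrier_mat (m1+m2) (m1+m2)" using JC by simp
  have "(1\<^sub>m (m1+m2) + c \<cdot>\<^sub>m (jmat m1 m2 * C)) *\<^sub>v v = 1\<^sub>m (m1+m2) *\<^sub>v v + (c \<cdot>\<^sub>m (jmat m1 m2 * C)) *\<^sub>v v"
    by (rule add_mult_distrib_mat_vec[OF one_carrier_mat cJC v])
  also have "\<dots> = v + c \<cdot>\<^sub>v ((jmat m1 m2 * C) *\<^sub>v v)"
    using smult_mat_mult_vec[OF JC v] v by simp
  also have "(jmat m1 m2 * C) *\<^sub>v v = jmat m1 m2 *\<^sub>v (C *\<^sub>v v)"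
    by (rule assoc_mult_mat_vec[OF jmat_carrier C v])
  finally show ?thesis .
qed

lemma fs_step_vec: assumes C: "dirac_potential m1 m2 C" and w: "w \<in> carrier_vec (m1+m2)"
  shows "fund_sol m1 m2 C z (Suc k) *\<^sub>v w = fund_sol m1 m2 C z k *\<^sub>v w +
     (\<i> * z) \<cdot>\<^sub>v (jmat m1 m2 *\<^sub>v (C k *\<^sub>v (fund_sol m1 m2 C z k *\<^sub>v w)))"
proof -
  have "fund_sol m1 m2 C z (Suc k) *\<^sub>v w = (1\<^sub>m (m1+m2) + (\<i> * z) \<cdot>\<^sub>m (jmat m1 m2 * C k)) *\<^sub>v (fund_sol m1 m2 C z k *\<^sub>v w)"
    using assoc_mult_mat_vec[OF step_mat_carrier[OF dirac_carrier[OF C]] fs_carrier[OF dirac_carrier[OF C]] w] by simp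
  then show ?thesis using step_mat_vec[OF dirac_carrier[OF C] fsv_carrier[OF C]] by simp
qed

lemma fs_shift: assumes C: "dirac_potential m1 m2 C"
  shows "fund_sol m1 m2 C z (n + j) = fund_sol m1 m2 (\<lambda>k. C (n + k)) z j * fund_sol m1 m2 C z n"
proof (induction j)
  case 0 then show ?case using left_mult_one_mat[OF fs_carrier[OF dirac_carrier[OF C], where z=z and k=n]] by simp
next
  case (Suc j)
  have "fund_sol m1 m2 C z (n + Suc j) = (1\<^sub>m (m1+m2) + (\<i> * z) \<cdot>\<^sub>m (jmat m1 m2 * C (n+j))) * fund_sol m1 m2 C z (n + j)"
    by simp
  also have "\<dots> = (1\<^sub>m (m1+m2) + (\<i> * z) \<cdot>\<^sub>m (jmat m1 m2 * C (n+j))) * (fund_sol m1 m2 (\<lambda>k. C (n + k)) z j * fund_sol m1 m2 C z n)"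
    using Suc by simp
  also have "\<dots> = ((1\<^sub>m (m1+m2) + (\<i> * z) \<cdot>\<^sub>m (jmat m1 m2 * C (n+j))) * fund_sol m1 m2 (\<lambda>k. C (n + k)) z j) * fund_sol m1 m2 C z n"
    by (rule assoc_mult_mat[symmetric, OF step_mat_carrier[OF dirac_carrier[OF C]]
          fs_carrier[OF dirac_carrier[OF dirac_shift[OF C]]] fs_carrier[OF dirac_carrier[OF C]]])
  finally show ?case by simp
qed

lemma fs_agree: assumes "\<forall>i<n. C i = C' i"
  shows "fund_sol m1 m2 C z n = fund_sol m1 m2 C' z n"
  using assms by (induction n) auto


lemma s_step: assumes C: "dirac_potential m1 m2 C" and w: "w \<in> carrier_vec (m1+m2)"
  shows "Re (ip (fund_sol m1 m2 C z (Suc k) *\<^sub>v w) (jmat m1 m2 *\<^sub>v (fund_sol m1 m2 C z (Suc k) *\<^sub>v w)))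
    = (1 + (cmod z)\<^sup>2) * Re (ip (fund_sol m1 m2 C z k *\<^sub>v w) (jmat m1 m2 *\<^sub>v (fund_sol m1 m2 C z k *\<^sub>v w)))
      - 2 * Im z * Re (ip (fund_sol m1 m2 C z k *\<^sub>v w) (C k *\<^sub>v (fund_sol m1 m2 C z k *\<^sub>v w)))"
proof -
  let ?u = "fund_sol m1 m2 C z k *\<^sub>v w"
  have u: "?u \<in> carrier_vec (m1+m2)" by (rule fsv_carrier[OF C])
  have e: "ip (fund_sol m1 m2 C z (Suc k) *\<^sub>v w) (jmat m1 m2 *\<^sub>v (fund_sol m1 m2 C z (Suc k) *\<^sub>v w))
    = (1 + cnj (\<i>*z) * (\<i>*z)) * ip ?u (jmat m1 m2 *\<^sub>v ?u) + ((\<i>*z) + cnj (\<i>*z)) * ip ?u (C k *\<^sub>v ?u)"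
    unfolding fs_step_vec[OF C w] by (rule step_ip[OF dirac_pdj[OF C] u])
  have c1: "cnj (\<i>*z) * (\<i>*z) = complex_of_real ((cmod z)\<^sup>2)"
  proof -
    have "cmod z * cmod z = Re z * Re z + Im z * Im z" using cmod_power2[of z] by (simp add: power2_eq_square)
    then show ?thesis by (simp add: complex_eq_iff power2_eq_square algebra_simps)
  qed
  have c2: "\<i>*z + cnj (\<i>*z) = complex_of_real (- 2 * Im z)"
    by (simp add: complex_eq_iff)
  show ?thesis unfolding e c1 c2 by simp
qed

lemma qfun_pos: "0 < qfun z"
  unfolding qfun_def by (simp add: add_pos_nonneg)

lemma qfun_mult: "qfun z * (1 + (cmod z)\<^sup>2) = 1"
proof -
  have "0 < 1 + (cmod z)\<^sup>2" by (simp add: add_pos_nonneg)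
  then show ?thesis unfolding qfun_def by simp
qed

lemma growth: assumes C: "dirac_potential m1 m2 C" and z: "Im z < 0" and w: "w \<in> carrier_vec (m1+m2)"
  and summ: "summable (\<lambda>k. qfun z ^ k * Re (ip (fund_sol m1 m2 C z k *\<^sub>v w) (C k *\<^sub>v (fund_sol m1 m2 C z k *\<^sub>v w))))"
  shows "qfun z ^ k * Re (ip (fund_sol m1 m2 C z k *\<^sub>v w) (jmat m1 m2 *\<^sub>v (fund_sol m1 m2 C z k *\<^sub>v w))) \<le> 0"
proof -
  define u where "u k = fund_sol m1 m2 C z k *\<^sub>v w" for k
  define s where "s k = qfun z ^ k * Re (ip (u k) (jmat m1 m2 *\<^sub>v u k))" for k
  define t where "t k = qfun z ^ k * Re (ip (u k) (C k *\<^sub>v u k))" for k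
  have uc: "u k \<in> carrier_vec (m1+m2)" for k unfolding u_def by (rule fsv_carrier[OF C])
  have q: "0 < qfun z" by (rule qfun_pos)
  have t0: "0 \<le> t k" for k
    unfolding t_def using D_nonneg[OF dirac_pdj[OF C] uc] q by simp
  have st: "s k \<le> t k" for k
    unfolding s_def t_def using QM_nonneg[OF dirac_pdj[OF C] uc, of k] q
    by (simp add: mult_left_mono)
  have inc: "s k \<le> s (Suc k)" for k
  proof -
    have "s (Suc k) = qfun z ^ k * (qfun z * (1 + (cmod z)\<^sup>2)) * Re (ip (u k) (jmat m1 m2 *\<^sub>v u k))
        + qfun z * (- 2 * Im z) * t k"
      unfolding s_def t_def u_def s_step[OF C w] by (simp add: algebra_simps)
    also have "\<dots> = s k + qfun z * (- 2 * Im z) * t k"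
      unfolding qfun_mult s_def by simp
    finally have eq: "s (Suc k) = s k + qfun z * (- 2 * Im z) * t k" .
    have a: "0 \<le> qfun z * (- 2 * Im z)" by (rule mult_nonneg_nonneg) (use q z in auto)
    have b: "0 \<le> qfun z * (- 2 * Im z) * t k" by (rule mult_nonneg_nonneg[OF a t0])
    show ?thesis using eq b by linarith
  qed
  have mono: "s k \<le> s j" if "k \<le> j" for j
    using that
  proof (induction j rule: dec_induct)
    case base then show ?case by simp
  next
    case (step j) then show ?case using inc[of j] by simp
  qed
  have lim: "t \<longlonglongrightarrow> 0"
    by (rule summable_LIMSEQ_zero) (use summ in \<open>unfold t_def u_def\<close>)
  have "s k \<le> 0"
    by (rule LIMSEQ_le_const[OF lim]) (use mono st order_trans in blast)
  then show ?thesis unfolding s_def u_def .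
qed

lemma step_inj: assumes D: "pdj m1 m2 D" and v: "v \<in> carrier_vec (m1+m2)" and c: "1 - c*c \<noteq> 0"
  and eq: "v + c \<cdot>\<^sub>v (jmat m1 m2 *\<^sub>v (D *\<^sub>v v)) = 0\<^sub>v (m1+m2)"
  shows "v = 0\<^sub>v (m1+m2)"
proof -
  define x where "x = jmat m1 m2 *\<^sub>v (D *\<^sub>v v)"
  have x: "x \<in> carrier_vec (m1+m2)" unfolding x_def by (rule mv_carrier[OF jmat_carrier])
  have hv: "v = (-c) \<cdot>\<^sub>v x"
  proof (rule eq_vecI)
    fix i assume i: "i < dim_vec ((-c) \<cdot>\<^sub>v x)"
    then have i': "i < m1+m2" using x by simp
    have "(v + c \<cdot>\<^sub>v x) $ i = 0" using eq i' unfolding x_def by simp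
    then show "v $ i = ((-c) \<cdot>\<^sub>v x) $ i" using i' v x by (simp add: add_eq_0_iff)
  qed (use v x in simp)
  have JDx: "jmat m1 m2 *\<^sub>v (D *\<^sub>v x) = v"
    unfolding x_def DJD_vec[OF D v] jmat_jmat_vec[OF v] ..
  have hx: "x = (-c) \<cdot>\<^sub>v v"
  proof -
    have "x = jmat m1 m2 *\<^sub>v (D *\<^sub>v ((-c) \<cdot>\<^sub>v x))" using hv unfolding x_def by simp
    also have "\<dots> = (-c) \<cdot>\<^sub>v (jmat m1 m2 *\<^sub>v (D *\<^sub>v x))"
      unfolding mult_mat_vec[OF D_carrier[OF D] x] mult_mat_vec[OF jmat_carrier Dv_carrier[OF D]] ..
    finally show ?thesis unfolding JDx .
  qed
  show ?thesis
  proof (rule eq_vecI)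
    fix i assume i: "i < dim_vec (0\<^sub>v (m1+m2) :: complex vec)"
    then have i': "i < m1+m2" by simp
    have "v $ i = (-c) * x $ i" using hv i' x by (metis index_smult_vec(1) carrier_vecD)
    also have "x $ i = (-c) * v $ i" using hx i' v by (metis index_smult_vec(1) carrier_vecD)
    finally have "(1 - c*c) * v $ i = 0" by (simp add: algebra_simps)
    then show "v $ i = 0\<^sub>v (m1+m2) $ i" using c i' by simp
  qed (use v in simp)
qed

lemma fs_inj: assumes C: "dirac_potential m1 m2 C" and v: "v \<in> carrier_vec (m1+m2)" and z: "1 + z*z \<noteq> 0"
  shows "fund_sol m1 m2 C z k *\<^sub>v v = 0\<^sub>v (m1+m2) \<Longrightarrow> v = 0\<^sub>v (m1+m2)"
proof (induction k)
  case 0 then show ?case using v by simp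
next
  case (Suc k)
  have c: "1 - (\<i>*z)*(\<i>*z) \<noteq> 0" using z by (simp add: algebra_simps)
  have "fund_sol m1 m2 C z k *\<^sub>v v = 0\<^sub>v (m1+m2)"
    by (rule step_inj[OF dirac_pdj[OF C] fsv_carrier[OF C] c]) (use Suc.prems fs_step_vec[OF C v] in simp)
  then show ?case by (rule Suc.IH)
qed

definition Pm :: "nat \<Rightarrow> nat \<Rightarrow> complex mat \<Rightarrow> complex mat" where
  "Pm m1 m2 F = four_block_mat F (0\<^sub>m m1 0) (1\<^sub>m m2) (0\<^sub>m m2 0)"

lemma Pm_carrier: "F \<in> carrier_mat m1 m2 \<Longrightarrow> Pm m1 m2 F \<in> carrier_mat (m1+m2) m2"
  unfolding Pm_def by (metis four_block_carrier_mat one_carrier_mat zero_carrier_mat add_0_right)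

lemma weyl_term_eq: "weyl_term m1 m2 C F z k =
   complex_of_real (qfun z ^ k) \<cdot>\<^sub>m (cadj (Pm m1 m2 F) * cadj (fund_sol m1 m2 C z k) * C k * fund_sol m1 m2 C z k * Pm m1 m2 F)"
  unfolding weyl_term_def Pm_def Let_def ..

lemma ip_expand: assumes A: "A \<in> carrier_mat n n" and x: "x \<in> carrier_vec n"
  shows "ip x (A *\<^sub>v x) = (\<Sum>a<n. \<Sum>b<n. cnj (x$a) * A$$(a,b) * x$b)"
  unfolding ip_def using A x by (simp add: scalar_prod_lessThan sum_distrib_left ac_simps)

lemma weyl_quad: assumes C: "dirac_potential m1 m2 C" and F: "F \<in> carrier_mat m1 m2" and x: "x \<in> carrier_vec m2"
  shows "ip x (weyl_term m1 m2 C F z k *\<^sub>v x) = complex_of_real (qfun z ^ k) *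
     ip (fund_sol m1 m2 C z k *\<^sub>v (Pm m1 m2 F *\<^sub>v x)) (C k *\<^sub>v (fund_sol m1 m2 C z k *\<^sub>v (Pm m1 m2 F *\<^sub>v x)))"
proof -
  let ?P = "Pm m1 m2 F" and ?W = "fund_sol m1 m2 C z k"
  have P: "?P \<in> carrier_mat (m1+m2) m2" by (rule Pm_carrier[OF F])
  have W: "?W \<in> carrier_mat (m1+m2) (m1+m2)" by (rule fs_carrier[OF dirac_carrier[OF C]])
  have Ck: "C k \<in> carrier_mat (m1+m2) (m1+m2)" by (rule dirac_carrier[OF C])
  have cP: "cadj ?P \<in> carrier_mat m2 (m1+m2)" using P by simp
  have cW: "cadj ?W \<in> carrier_mat (m1+m2) (m1+m2)" using W by simp
  have M1: "cadj ?P * cadj ?W \<in> carrier_mat m2 (m1+m2)" using cP cW by (rule mult_carrier_mat)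
  have M2: "cadj ?P * cadj ?W * C k \<in> carrier_mat m2 (m1+m2)" using M1 Ck by (rule mult_carrier_mat)
  have M3: "cadj ?P * cadj ?W * C k * ?W \<in> carrier_mat m2 (m1+m2)" using M2 W by (rule mult_carrier_mat)
  have M4: "cadj ?P * cadj ?W * C k * ?W * ?P \<in> carrier_mat m2 m2" using M3 P by (rule mult_carrier_mat)
  have Px: "?P *\<^sub>v x \<in> carrier_vec (m1+m2)" by (rule mv_carrier[OF P])
  have WPx: "?W *\<^sub>v (?P *\<^sub>v x) \<in> carrier_vec (m1+m2)" by (rule mv_carrier[OF W])
  have CWPx: "C k *\<^sub>v (?W *\<^sub>v (?P *\<^sub>v x)) \<in> carrier_vec (m1+m2)" by (rule mv_carrier[OF Ck])
  have cWCWPx: "cadj ?W *\<^sub>v (C k *\<^sub>v (?W *\<^sub>v (?P *\<^sub>v x))) \<in> carrier_vec (m1+m2)" by (rule mv_carrier[OF cW])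
  have "(cadj ?P * cadj ?W * C k * ?W * ?P) *\<^sub>v x = cadj ?P *\<^sub>v (cadj ?W *\<^sub>v (C k *\<^sub>v (?W *\<^sub>v (?P *\<^sub>v x))))"
    unfolding assoc_mult_mat_vec[OF M3 P x] assoc_mult_mat_vec[OF M2 W Px] assoc_mult_mat_vec[OF M1 Ck WPx]
      assoc_mult_mat_vec[OF cP cW CWPx] ..
  then have "ip x ((cadj ?P * cadj ?W * C k * ?W * ?P) *\<^sub>v x) = ip (?W *\<^sub>v (?P *\<^sub>v x)) (C k *\<^sub>v (?W *\<^sub>v (?P *\<^sub>v x)))"
    using ip_adj[OF cP x cWCWPx] ip_adj[OF cW Px CWPx] by simp
  moreover have "ip x (weyl_term m1 m2 C F z k *\<^sub>v x) = complex_of_real (qfun z ^ k) * ip x ((cadj ?P * cadj ?W * C k * ?W * ?P) *\<^sub>v x)"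
    unfolding weyl_term_eq smult_mat_mult_vec[OF M4 x] by (rule ip_smult_right) (use M4 x P in simp)
  ultimately show ?thesis by simp
qed

lemma weyl_summable: assumes W: "is_weyl_function m1 m2 C \<phi>" and z: "Im z < 0" and x: "x \<in> carrier_vec m2"
  and C: "dirac_potential m1 m2 C"
  shows "summable (\<lambda>k. ip x (weyl_term m1 m2 C (\<phi> z) z k *\<^sub>v x))"
proof -
  have F: "\<phi> z \<in> carrier_mat m1 m2" and S: "\<And>a b. a < m2 \<Longrightarrow> b < m2 \<Longrightarrow> summable (\<lambda>k. weyl_term m1 m2 C (\<phi> z) z k $$ (a, b))"
    using W z unfolding is_weyl_function_def by auto
  have wc: "weyl_term m1 m2 C (\<phi> z) z k \<in> carrier_mat m2 m2" for k
    unfolding weyl_term_eq using Pm_carrier[OF F] fs_carrier[OF dirac_carrier[OF C]] dirac_carrier[OF C]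
    by (auto intro!: mult_carrier_mat)
  have "summable (\<lambda>k. \<Sum>a<m2. \<Sum>b<m2. cnj (x$a) * weyl_term m1 m2 C (\<phi> z) z k $$ (a,b) * x$b)"
    by (intro summable_sum summable_mult summable_mult2 S) auto
  then show ?thesis unfolding ip_expand[OF wc x] .
qed


lemma good: fixes n :: nat assumes C: "dirac_potential m1 m2 C" and W: "is_weyl_function m1 m2 C \<phi>" and z: "Im z < 0"
  and x: "x \<in> carrier_vec m2"
  defines "w \<equiv> fund_sol m1 m2 C z n *\<^sub>v (Pm m1 m2 (\<phi> z) *\<^sub>v x)"
  shows "Re (ip w (jmat m1 m2 *\<^sub>v w)) \<le> 0"
    "(1 + (cmod z)\<^sup>2) * Re (ip w (jmat m1 m2 *\<^sub>v w)) - 2 * Im z * Re (ip w (C n *\<^sub>v w)) \<le> 0"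
proof -
  have F: "\<phi> z \<in> carrier_mat m1 m2" using W z unfolding is_weyl_function_def by auto
  let ?P = "Pm m1 m2 (\<phi> z)"
  let ?C' = "\<lambda>k. C (n + k)"
  have C': "dirac_potential m1 m2 ?C'" by (rule dirac_shift[OF C])
  have P: "?P \<in> carrier_mat (m1+m2) m2" by (rule Pm_carrier[OF F])
  have Px: "?P *\<^sub>v x \<in> carrier_vec (m1+m2)" by (rule mv_carrier[OF P])
  have wc: "w \<in> carrier_vec (m1+m2)" unfolding w_def by (rule fsv_carrier[OF C])
  define f where "f k = Re (ip x (weyl_term m1 m2 C (\<phi> z) z k *\<^sub>v x))" for k
  have sf: "summable f" unfolding f_def by (rule summable_Re[OF weyl_summable[OF W z x C]])
  have fk: "f k = qfun z ^ k * Re (ip (fund_sol m1 m2 C z k *\<^sub>v (?P *\<^sub>v x)) (C k *\<^sub>v (fund_sol m1 m2 C z k *\<^sub>v (?P *\<^sub>v x))))" for k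
    unfolding f_def weyl_quad[OF C F x] by simp
  have sh: "fund_sol m1 m2 C z (n + j) *\<^sub>v (?P *\<^sub>v x) = fund_sol m1 m2 ?C' z j *\<^sub>v w" for j
    unfolding fs_shift[OF C] w_def
    by (rule assoc_mult_mat_vec[OF fs_carrier[OF dirac_carrier[OF C']] fs_carrier[OF dirac_carrier[OF C]] Px])
  define g where "g j = qfun z ^ j * Re (ip (fund_sol m1 m2 ?C' z j *\<^sub>v w) (?C' j *\<^sub>v (fund_sol m1 m2 ?C' z j *\<^sub>v w)))" for j
  have fg: "f (j + n) = qfun z ^ n * g j" for j
    unfolding fk g_def using sh[of j] by (simp add: add.commute power_add)
  have "summable (\<lambda>j. f (j + n))" by (rule summable_ignore_initial_segment[OF sf])
  then have "summable (\<lambda>j. qfun z ^ n * g j)" unfolding fg .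
  then have sg: "summable g" using qfun_pos[of z] by simp
  have g0: "qfun z ^ 0 * Re (ip (fund_sol m1 m2 ?C' z 0 *\<^sub>v w) (jmat m1 m2 *\<^sub>v (fund_sol m1 m2 ?C' z 0 *\<^sub>v w))) \<le> 0"
    by (rule growth[OF C' z wc]) (use sg in \<open>unfold g_def\<close>)
  have g1: "qfun z ^ 1 * Re (ip (fund_sol m1 m2 ?C' z 1 *\<^sub>v w) (jmat m1 m2 *\<^sub>v (fund_sol m1 m2 ?C' z 1 *\<^sub>v w))) \<le> 0"
    by (rule growth[OF C' z wc]) (use sg in \<open>unfold g_def\<close>)
  have w0: "fund_sol m1 m2 ?C' z 0 *\<^sub>v w = w" using wc by simp
  show "Re (ip w (jmat m1 m2 *\<^sub>v w)) \<le> 0" using g0 w0 by simp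
  have "Re (ip (fund_sol m1 m2 ?C' z 1 *\<^sub>v w) (jmat m1 m2 *\<^sub>v (fund_sol m1 m2 ?C' z 1 *\<^sub>v w))) \<le> 0"
    using g1 qfun_pos[of z] by (simp add: mult_le_0_iff)
  then show "(1 + (cmod z)\<^sup>2) * Re (ip w (jmat m1 m2 *\<^sub>v w)) - 2 * Im z * Re (ip w (C n *\<^sub>v w)) \<le> 0"
    using s_step[OF C' wc, of z 0] w0 by simp
qed

definition upn :: "nat \<Rightarrow> complex vec \<Rightarrow> real" where
  "upn m1 u = (\<Sum>i<m1. (cmod (u$i))\<^sup>2)"
definition lown :: "nat \<Rightarrow> nat \<Rightarrow> complex vec \<Rightarrow> real" where
  "lown m1 m2 u = (\<Sum>i\<in>{m1..<m1+m2}. (cmod (u$i))\<^sup>2)"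

lemma lessThan_split: "{..<m1+m2} = {..<m1} \<union> {m1..<m1+m2::nat}" by auto

lemma cnj_self: "cnj z * z = complex_of_real ((cmod z)\<^sup>2)"
  by (subst complex_norm_square) (simp add: mult.commute)

lemma ns_split: assumes u: "u \<in> carrier_vec (m1+m2)"
  shows "Re (ip u u) = upn m1 u + lown m1 m2 u"
proof -
  have "Re (ip u u) = (\<Sum>i<m1+m2. (cmod (u$i))\<^sup>2)" using u by (simp add: ip_self_Re)
  also have "\<dots> = upn m1 u + lown m1 m2 u"
    unfolding upn_def lown_def lessThan_split by (rule sum.union_disjoint) auto
  finally show ?thesis .
qed

lemma hqJ_split: assumes u: "u \<in> carrier_vec (m1+m2)"
  shows "Re (ip u (jmat m1 m2 *\<^sub>v u)) = upn m1 u - lown m1 m2 u"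
proof -
  have "ip u (jmat m1 m2 *\<^sub>v u) = (\<Sum>i<m1+m2. cnj (u$i) * (if i < m1 then u$i else - u$i))"
    unfolding ip_def using u jmat_vec[OF u] by (intro sum.cong) (auto simp del: index_mult_mat_vec)
  also have "\<dots> = (\<Sum>i<m1. cnj (u$i) * (if i < m1 then u$i else - u$i)) +
      (\<Sum>i\<in>{m1..<m1+m2}. cnj (u$i) * (if i < m1 then u$i else - u$i))"
    unfolding lessThan_split by (rule sum.union_disjoint) auto
  also have "(\<Sum>i<m1. cnj (u$i) * (if i < m1 then u$i else - u$i)) = (\<Sum>i<m1. complex_of_real ((cmod (u$i))\<^sup>2))"
    by (intro sum.cong) (auto simp: cnj_self)
  also have "(\<Sum>i\<in>{m1..<m1+m2}. cnj (u$i) * (if i < m1 then u$i else - u$i)) = (\<Sum>i\<in>{m1..<m1+m2}. - complex_of_real ((cmod (u$i))\<^sup>2))"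
    by (intro sum.cong) (auto simp: cnj_self)
  finally show ?thesis unfolding upn_def lown_def by (simp add: sum_negf)
qed

lemma upn_nonneg: "0 \<le> upn m1 u" unfolding upn_def by (simp add: sum_nonneg)
lemma lown_nonneg: "0 \<le> lown m1 m2 u" unfolding lown_def by (simp add: sum_nonneg)

definition SA :: "nat \<Rightarrow> complex mat \<Rightarrow> real" where
  "SA n A = (\<Sum>a<n. \<Sum>b<n. cmod (A $$ (a,b)))"

lemma SA_nonneg: "0 \<le> SA n A" unfolding SA_def by (simp add: sum_nonneg)

lemma quad_bound: assumes A: "A \<in> carrier_mat n n" and u: "u \<in> carrier_vec n"
  shows "\<bar>Re (ip u (A *\<^sub>v u))\<bar> \<le> SA n A * Re (ip u u)"
proof -
  define N where "N = Re (ip u u)"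
  have N: "N = (\<Sum>i<n. (cmod (u$i))\<^sup>2)" unfolding N_def using u by (simp add: ip_self_Re)
  have sq: "(cmod (u$a))\<^sup>2 \<le> N" if "a < n" for a
  proof -
    have "(\<Sum>i\<in>{a}. (cmod (u$i))\<^sup>2) \<le> (\<Sum>i<n. (cmod (u$i))\<^sup>2)"
      by (rule sum_mono2) (use that in auto)
    then show ?thesis unfolding N by simp
  qed
  have pr: "cmod (u$a) * cmod (u$b) \<le> N" if "a < n" "b < n" for a b
  proof -
    have "2 * (cmod (u$a) * cmod (u$b)) \<le> (cmod (u$a))\<^sup>2 + (cmod (u$b))\<^sup>2"
      using sum_squares_bound[of "cmod (u$a)" "cmod (u$b)"] by (simp add: mult.assoc)
    then show ?thesis using sq[OF that(1)] sq[OF that(2)] by linarith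
  qed
  have "\<bar>Re (ip u (A *\<^sub>v u))\<bar> \<le> cmod (ip u (A *\<^sub>v u))" by (rule abs_Re_le_cmod)
  also have "\<dots> = cmod (\<Sum>a<n. \<Sum>b<n. cnj (u$a) * A$$(a,b) * u$b)" unfolding ip_expand[OF A u] ..
  also have "\<dots> \<le> (\<Sum>a<n. cmod (\<Sum>b<n. cnj (u$a) * A$$(a,b) * u$b))" by (rule norm_sum)
  also have "\<dots> \<le> (\<Sum>a<n. \<Sum>b<n. cmod (cnj (u$a) * A$$(a,b) * u$b))" by (intro sum_mono norm_sum)
  also have "\<dots> \<le> (\<Sum>a<n. \<Sum>b<n. cmod (A$$(a,b)) * N)"
  proof (intro sum_mono)
    fix a b assume a: "a \<in> {..<n}" and b: "b \<in> {..<n}"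
    have "cmod (cnj (u$a) * A$$(a,b) * u$b) = cmod (A$$(a,b)) * (cmod (u$a) * cmod (u$b))"
      by (simp add: norm_mult)
    also have "\<dots> \<le> cmod (A$$(a,b)) * N" using pr a b by (intro mult_left_mono) auto
    finally show "cmod (cnj (u$a) * A$$(a,b) * u$b) \<le> cmod (A$$(a,b)) * N" .
  qed
  also have "\<dots> = SA n A * N" unfolding SA_def by (simp add: sum_distrib_right)
  finally show ?thesis unfolding N_def .
qed

lemma ip_hermG: assumes G: "G \<in> carrier_mat n n" "cadj G = G" and y: "y \<in> carrier_vec n" and w: "w \<in> carrier_vec n"
  and Gy: "G *\<^sub>v y = 0\<^sub>v n"
  shows "ip (y - w) (G *\<^sub>v (y - w)) = ip w (G *\<^sub>v w)"
proof -
  have Gw: "G *\<^sub>v w \<in> carrier_vec n" by (rule mv_carrier[OF G(1)])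
  have yw: "y - w \<in> carrier_vec n" using y w by simp
  have e: "G *\<^sub>v (y - w) = 0\<^sub>v n - G *\<^sub>v w"
    unfolding mult_minus_distrib_mat_vec[OF G(1) y w] Gy ..
  have "ip (y - w) (G *\<^sub>v (y - w)) = ip (y - w) (0\<^sub>v n) - ip (y - w) (G *\<^sub>v w)"
    unfolding e by (rule ip_minus_right[OF yw _ Gw]) simp
  also have "ip (y - w) (0\<^sub>v n) = 0" using ip_zero_right[of "y - w"] yw w by simp
  also have "ip (y - w) (G *\<^sub>v w) = ip y (G *\<^sub>v w) - ip w (G *\<^sub>v w)"
    by (rule ip_minus_left[OF y w Gw])
  also have "ip y (G *\<^sub>v w) = 0"
    using ip_herm[OF G y w] Gy ip_zero_left by simp
  finally show ?thesis by simp
qed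

lemma para: assumes G: "G \<in> carrier_mat n n" and a: "a \<in> carrier_vec n" and b: "b \<in> carrier_vec n"
  shows "ip (a + b) (G *\<^sub>v (a + b)) + ip (a - b) (G *\<^sub>v (a - b)) = 2 * ip a (G *\<^sub>v a) + 2 * ip b (G *\<^sub>v b)"
proof -
  have Ga: "G *\<^sub>v a \<in> carrier_vec n" and Gb: "G *\<^sub>v b \<in> carrier_vec n" by (rule mv_carrier[OF G])+
  have ab: "a + b \<in> carrier_vec n" "a - b \<in> carrier_vec n" using a b by simp_all
  have "ip (a + b) (G *\<^sub>v (a + b)) = ip a (G *\<^sub>v a) + ip a (G *\<^sub>v b) + (ip b (G *\<^sub>v a) + ip b (G *\<^sub>v b))"
    unfolding mult_add_distrib_mat_vec[OF G a b] ip_add_left[OF a b add_carrier_vec[OF Ga Gb]]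
      ip_add_right[OF a Ga Gb] ip_add_right[OF b Ga Gb] ..
  moreover have "ip (a - b) (G *\<^sub>v (a - b)) = ip a (G *\<^sub>v a) - ip a (G *\<^sub>v b) - (ip b (G *\<^sub>v a) - ip b (G *\<^sub>v b))"
    unfolding mult_minus_distrib_mat_vec[OF G a b] ip_minus_left[OF a b minus_carrier_vec[OF Ga Gb]]
      ip_minus_right[OF a Ga Gb] ip_minus_right[OF b Ga Gb] ..
  ultimately show ?thesis by simp
qed

lemma Pm_lower: assumes F: "F \<in> carrier_mat m1 m2" and x: "x \<in> carrier_vec m2" and i: "i < m2"
  shows "(Pm m1 m2 F *\<^sub>v x) $ (m1 + i) = x $ i"
proof -
  have P: "Pm m1 m2 F \<in> carrier_mat (m1+m2) m2" by (rule Pm_carrier[OF F])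
  have "(Pm m1 m2 F *\<^sub>v x) $ (m1 + i) = (\<Sum>b<m2. Pm m1 m2 F $$ (m1+i, b) * x$b)"
    using P x i by (simp add: scalar_prod_lessThan)
  also have "\<dots> = (\<Sum>b<m2. (if b = i then x$i else 0))"
    using F i unfolding Pm_def by (intro sum.cong) (auto simp: index_mat_four_block)
  also have "\<dots> = x $ i" using i by simp
  finally show ?thesis .
qed


lemma mv_index: assumes A: "A \<in> carrier_mat n k" and x: "x \<in> carrier_vec k" and i: "i < n"
  shows "(A *\<^sub>v x) $ i = (\<Sum>b<k. A $$ (i,b) * x$b)"
proof -
  have "(A *\<^sub>v x) $ i = row A i \<bullet> x" using A i by simp
  also have "\<dots> = (\<Sum>b<k. row A i $ b * x$b)" using x by (simp add: scalar_prod_lessThan)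
  also have "\<dots> = (\<Sum>b<k. A $$ (i,b) * x$b)" using A i by (intro sum.cong) auto
  finally show ?thesis .
qed

lemma cadj_add: assumes "A \<in> carrier_mat n k" "B \<in> carrier_mat n k"
  shows "cadj (A + B) = cadj A + cadj B"
  using assms by (intro eq_matI) auto

lemma surj_lower: assumes C: "dirac_potential m1 m2 C" and W: "is_weyl_function m1 m2 C \<phi>"
  and z: "Im z < 0" and z1: "1 + z * z \<noteq> 0" and y2: "y2 \<in> carrier_vec m2"
  shows "\<exists>x \<in> carrier_vec m2. \<forall>i<m2. (fund_sol m1 m2 C z n *\<^sub>v (Pm m1 m2 (\<phi> z) *\<^sub>v x)) $ (m1+i) = y2 $ i"
proof -
  have F: "\<phi> z \<in> carrier_mat m1 m2" using W z unfolding is_weyl_function_def by auto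
  let ?W = "fund_sol m1 m2 C z n" and ?P = "Pm m1 m2 (\<phi> z)"
  have Wc: "?W \<in> carrier_mat (m1+m2) (m1+m2)" by (rule fs_carrier[OF dirac_carrier[OF C]])
  have Pc: "?P \<in> carrier_mat (m1+m2) m2" by (rule Pm_carrier[OF F])
  have WP: "?W * ?P \<in> carrier_mat (m1+m2) m2" using Wc Pc by (rule mult_carrier_mat)
  define B where "B = mat m2 m2 (\<lambda>(a,b). (?W * ?P) $$ (m1+a, b))"
  have Bc: "B \<in> carrier_mat m2 m2" unfolding B_def by simp
  have Bx: "(B *\<^sub>v x) $ a = (?W *\<^sub>v (?P *\<^sub>v x)) $ (m1+a)" if x: "x \<in> carrier_vec m2" and a: "a < m2" for x a
  proof -
    have "(B *\<^sub>v x) $ a = (\<Sum>b<m2. (?W * ?P) $$ (m1+a, b) * x$b)"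
      using Bc x a unfolding B_def by (simp add: scalar_prod_lessThan)
    also have "\<dots> = ((?W * ?P) *\<^sub>v x) $ (m1+a)"
      using mv_index[OF WP x, of "m1+a"] a by simp
    also have "\<dots> = (?W *\<^sub>v (?P *\<^sub>v x)) $ (m1+a)"
      using assoc_mult_mat_vec[OF Wc Pc x] by simp
    finally show ?thesis .
  qed
  have inj: "x = 0\<^sub>v m2" if x: "x \<in> carrier_vec m2" and Bx0: "B *\<^sub>v x = 0\<^sub>v m2" for x
  proof -
    define w where "w = ?W *\<^sub>v (?P *\<^sub>v x)"
    have wc: "w \<in> carrier_vec (m1+m2)" unfolding w_def by (rule fsv_carrier[OF C])
    have low0: "w $ (m1+i) = 0" if "i < m2" for i
      using Bx[OF x that] Bx0 that unfolding w_def by (metis index_zero_vec(1))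
    have "lown m1 m2 w = (\<Sum>i\<in>{m1..<m1+m2}. 0)"
      unfolding lown_def
    proof (rule sum.cong)
      fix i assume "i \<in> {m1..<m1+m2}"
      then obtain k where "i = m1 + k" "k < m2" by (metis atLeastLessThan_iff le_Suc_ex add_less_cancel_left)
      then show "(cmod (w $ i))\<^sup>2 = 0" using low0 by simp
    qed simp
    then have l0: "lown m1 m2 w = 0" by simp
    have "Re (ip w (jmat m1 m2 *\<^sub>v w)) \<le> 0" unfolding w_def by (rule good(1)[OF C W z x])
    then have "upn m1 w \<le> 0" using hqJ_split[OF wc] l0 by simp
    then have "Re (ip w w) \<le> 0" using ns_split[OF wc] l0 by simp
    then have "w = 0\<^sub>v (dim_vec w)" by (rule ip_self_zero)
    then have "?W *\<^sub>v (?P *\<^sub>v x) = 0\<^sub>v (m1+m2)" using wc Wc unfolding w_def by simp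
    then have Px0: "?P *\<^sub>v x = 0\<^sub>v (m1+m2)" by (rule fs_inj[OF C mv_carrier[OF Pc] z1])
    show ?thesis
    proof (rule eq_vecI)
      fix i assume "i < dim_vec (0\<^sub>v m2 :: complex vec)"
      then have i: "i < m2" by simp
      have "x $ i = (?P *\<^sub>v x) $ (m1 + i)" using Pm_lower[OF F x i] by simp
      then show "x $ i = 0\<^sub>v m2 $ i" using Px0 i by simp
    qed (use x in simp)
  qed
  have det: "det B \<noteq> 0"
  proof
    assume "det B = 0"
    then obtain v where "v \<in> carrier_vec m2" "v \<noteq> 0\<^sub>v m2" "B *\<^sub>v v = 0\<^sub>v m2"
      using det_0_iff_vec_prod_zero[OF Bc] by auto
    then show False using inj by blast
  qed
  define x where "x = (1 / det B) \<cdot>\<^sub>v (adj_mat B *\<^sub>v y2)"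
  have adjc: "adj_mat B \<in> carrier_mat m2 m2" using adj_mat(1)[OF Bc] .
  have ay: "adj_mat B *\<^sub>v y2 \<in> carrier_vec m2" by (rule mv_carrier[OF adjc])
  have xc: "x \<in> carrier_vec m2" unfolding x_def using ay by simp
  have "B *\<^sub>v x = (1 / det B) \<cdot>\<^sub>v (B *\<^sub>v (adj_mat B *\<^sub>v y2))"
    unfolding x_def by (rule mult_mat_vec[OF Bc ay])
  also have "B *\<^sub>v (adj_mat B *\<^sub>v y2) = (B * adj_mat B) *\<^sub>v y2"
    by (rule assoc_mult_mat_vec[symmetric, OF Bc adjc y2])
  also have "\<dots> = (det B \<cdot>\<^sub>m 1\<^sub>m m2) *\<^sub>v y2" unfolding adj_mat(2)[OF Bc] ..
  also have "\<dots> = det B \<cdot>\<^sub>v y2" using smult_mat_mult_vec[OF one_carrier_mat y2] y2 by simp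
  finally have "B *\<^sub>v x = y2" using det y2 by (simp add: smult_smult_assoc)
  then show ?thesis using Bx[OF xc] xc by auto
qed

lemma lown_eq: assumes "\<And>i. i < m2 \<Longrightarrow> u $ (m1+i) = v $ (m1+i)"
  shows "lown m1 m2 u = lown m1 m2 v"
  unfolding lown_def
proof (rule sum.cong)
  fix i assume "i \<in> {m1..<m1+m2}"
  then obtain k where "i = m1 + k" "k < m2" by (metis atLeastLessThan_iff le_Suc_ex add_less_cancel_left)
  then show "(cmod (u $ i))\<^sup>2 = (cmod (v $ i))\<^sup>2" using assms by simp
qed simp

lemma lown_zero: assumes "\<And>i. i < m2 \<Longrightarrow> u $ (m1+i) = 0"
  shows "lown m1 m2 u = 0"
proof -
  have "lown m1 m2 u = lown m1 m2 (0\<^sub>v (m1+m2))"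
    by (rule lown_eq) (use assms in simp)
  also have "\<dots> = 0" unfolding lown_def by simp
  finally show ?thesis .
qed

lemma small_le_zero: fixes Q K :: real
  assumes K: "0 \<le> K" and main: "\<And>d. 0 < d \<Longrightarrow> d \<le> 1/2 \<Longrightarrow> Q \<le> d\<^sup>2 * K"
  shows "Q \<le> 0"
proof (rule ccontr)
  assume "\<not> Q \<le> 0"
  then have Q: "0 < Q" by simp
  define d where "d = min (1/2) (Q / (2 * (K + 1)))"
  have d0: "0 < d" unfolding d_def using Q K by simp
  have d1: "d \<le> 1/2" unfolding d_def by (rule min.cobounded1)
  have d2: "d \<le> Q / (2 * (K + 1))" unfolding d_def by (rule min.cobounded2)
  have "Q \<le> d\<^sup>2 * K" by (rule main[OF d0 d1])
  also have "\<dots> \<le> d * K" using d0 d1 K by (simp add: power2_eq_square mult_right_mono)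
  also have "\<dots> \<le> Q / (2 * (K + 1)) * K" using d2 K by (rule mult_right_mono)
  also have "\<dots> < Q"
  proof -
    have "Q / (2 * (K + 1)) * K = Q * (K / (2 * (K + 1)))" by simp
    also have "K / (2 * (K + 1)) < 1" using K by simp
    then have "Q * (K / (2 * (K + 1))) < Q * 1" using Q by (intro mult_strict_left_mono) auto
    finally show ?thesis by simp
  qed
  finally show False by simp
qed

lemma ker_incl:
  fixes n :: nat
  assumes C: "dirac_potential m1 m2 C" and C': "dirac_potential m1 m2 C'"
    and W: "is_weyl_function m1 m2 C \<phi>" and W': "is_weyl_function m1 m2 C' \<phi>"
    and agree: "\<And>z. fund_sol m1 m2 C z n = fund_sol m1 m2 C' z n"
    and y: "y \<in> carrier_vec (m1+m2)" and Gy: "C' n *\<^sub>v y + jmat m1 m2 *\<^sub>v y = 0\<^sub>v (m1+m2)"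
  shows "C n *\<^sub>v y + jmat m1 m2 *\<^sub>v y = 0\<^sub>v (m1+m2)"
proof -
  let ?J = "jmat m1 m2"
  have Cn: "C n \<in> carrier_mat (m1+m2) (m1+m2)" by (rule dirac_carrier[OF C])
  have C'n: "C' n \<in> carrier_mat (m1+m2) (m1+m2)" by (rule dirac_carrier[OF C'])
  define G where "G = C n + ?J"
  define G' where "G' = C' n + ?J"
  have Gc: "G \<in> carrier_mat (m1+m2) (m1+m2)" unfolding G_def by (intro add_carrier_mat Cn jmat_carrier)
  have G'c: "G' \<in> carrier_mat (m1+m2) (m1+m2)" unfolding G'_def by (intro add_carrier_mat C'n jmat_carrier)
  have G'h: "cadj G' = G'"
    unfolding G'_def cadj_add[OF C'n jmat_carrier] D_herm[OF dirac_pdj[OF C']] cadj_jmat ..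
  have Gv: "G *\<^sub>v v = C n *\<^sub>v v + ?J *\<^sub>v v" if "v \<in> carrier_vec (m1+m2)" for v
    unfolding G_def by (rule add_mult_distrib_mat_vec[OF Cn jmat_carrier that])
  have G'v: "G' *\<^sub>v v = C' n *\<^sub>v v + ?J *\<^sub>v v" if "v \<in> carrier_vec (m1+m2)" for v
    unfolding G'_def by (rule add_mult_distrib_mat_vec[OF C'n jmat_carrier that])
  have Qp: "Re (ip v (G *\<^sub>v v)) = Re (ip v (C n *\<^sub>v v)) + Re (ip v (?J *\<^sub>v v))" if v: "v \<in> carrier_vec (m1+m2)" for v
    unfolding Gv[OF v] ip_add_right[OF v mv_carrier[OF Cn] mv_carrier[OF jmat_carrier]] by simp
  have Qp': "Re (ip v (G' *\<^sub>v v)) = Re (ip v (C' n *\<^sub>v v)) + Re (ip v (?J *\<^sub>v v))" if v: "v \<in> carrier_vec (m1+m2)" for v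
    unfolding G'v[OF v] ip_add_right[OF v mv_carrier[OF C'n] mv_carrier[OF jmat_carrier]] by simp
  have G'y: "G' *\<^sub>v y = 0\<^sub>v (m1+m2)" using Gy G'v[OF y] by simp
  define y2 where "y2 = vec m2 (\<lambda>i. y $ (m1+i))"
  have y2c: "y2 \<in> carrier_vec m2" unfolding y2_def by simp
  define L where "L = lown m1 m2 y"
  define K where "K = 2 * ((2 * SA (m1+m2) (C n) + 1) * L) + SA (m1+m2) G * ((2 * SA (m1+m2) (C' n) + 1) * L)"
  have L0: "0 \<le> L" unfolding L_def by (rule lown_nonneg)
  have K0: "0 \<le> K" unfolding K_def using L0 SA_nonneg
    by (intro add_nonneg_nonneg mult_nonneg_nonneg) auto
  have main: "Re (ip y (G *\<^sub>v y)) \<le> d\<^sup>2 * K" if d: "0 < d" "d \<le> 1/2" for d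
  proof -
    define t where "t = 1 + d"
    have t: "1 < t" "t < 2" using d unfolding t_def by auto
    define z where "z = - (\<i> * complex_of_real t)"
    have zIm: "Im z = - t" unfolding z_def by simp
    have zc: "cmod z = t" unfolding z_def using t by (simp add: norm_mult)
    have z0: "Im z < 0" using t zIm by simp
    have "1 + z * z = complex_of_real (1 - t * t)" unfolding z_def by (simp add: complex_eq_iff)
    moreover have "1 - t * t \<noteq> 0" using t by (smt (verit) mult_less_cancel_right2)
    ultimately have z1: "1 + z * z \<noteq> 0" by (metis of_real_eq_0_iff)
    obtain x where xc: "x \<in> carrier_vec m2"
      and xl: "\<forall>i<m2. (fund_sol m1 m2 C z n *\<^sub>v (Pm m1 m2 (\<phi> z) *\<^sub>v x)) $ (m1+i) = y2 $ i"
      using surj_lower[OF C W z0 z1 y2c] by blast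
    define w where "w = fund_sol m1 m2 C z n *\<^sub>v (Pm m1 m2 (\<phi> z) *\<^sub>v x)"
    have wc: "w \<in> carrier_vec (m1+m2)" unfolding w_def by (rule fsv_carrier[OF C])
    have g0: "Re (ip w (?J *\<^sub>v w)) \<le> 0" unfolding w_def by (rule good(1)[OF C W z0 xc])
    have g1: "(1 + (cmod z)\<^sup>2) * Re (ip w (?J *\<^sub>v w)) - 2 * Im z * Re (ip w (C n *\<^sub>v w)) \<le> 0"
      unfolding w_def by (rule good(2)[OF C W z0 xc])
    have g1': "(1 + (cmod z)\<^sup>2) * Re (ip w (?J *\<^sub>v w)) - 2 * Im z * Re (ip w (C' n *\<^sub>v w)) \<le> 0"
      unfolding w_def agree by (rule good(2)[OF C' W' z0 xc])
    have wl: "w $ (m1+i) = y $ (m1+i)" if "i < m2" for i using xl that unfolding w_def y2_def by simp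
    have lw: "lown m1 m2 w = L" unfolding L_def by (rule lown_eq[OF wl])
    define RJ where "RJ = Re (ip w (?J *\<^sub>v w))"
    define RC where "RC = Re (ip w (C n *\<^sub>v w))"
    define RC' where "RC' = Re (ip w (C' n *\<^sub>v w))"
    have hJ: "RJ = upn m1 w - L" unfolding RJ_def using hqJ_split[OF wc] lw by simp
    have nsw: "Re (ip w w) \<le> 2 * L" using ns_split[OF wc] lw hJ g0 unfolding RJ_def by simp
    have bC: "RC \<le> SA (m1+m2) (C n) * (2 * L)"
    proof -
      have "RC \<le> SA (m1+m2) (C n) * Re (ip w w)" using quad_bound[OF Cn wc] unfolding RC_def by simp
      also have "\<dots> \<le> SA (m1+m2) (C n) * (2 * L)" using nsw SA_nonneg by (rule mult_left_mono)
      finally show ?thesis .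
    qed
    have bC': "RC' \<le> SA (m1+m2) (C' n) * (2 * L)"
    proof -
      have "RC' \<le> SA (m1+m2) (C' n) * Re (ip w w)" using quad_bound[OF C'n wc] unfolding RC'_def by simp
      also have "\<dots> \<le> SA (m1+m2) (C' n) * (2 * L)" using nsw SA_nonneg by (rule mult_left_mono)
      finally show ?thesis .
    qed
    have mJ: "- RJ \<le> L" using hJ upn_nonneg[of m1 w] by simp
    have qpw: "RC + RJ \<le> d\<^sup>2 * ((2 * SA (m1+m2) (C n) + 1) * L)"
    proof -
      have p0: "0 \<le> RC + RJ" unfolding RC_def RJ_def by (rule QP_nonneg[OF dirac_pdj[OF C] wc])
      have gg: "(1 + t\<^sup>2) * RJ + 2 * t * RC \<le> 0" using g1 unfolding RC_def[symmetric] RJ_def[symmetric] zc zIm by simp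
      have e: "(1+t)\<^sup>2 * (RC + RJ) - d\<^sup>2 * (RC - RJ) = 2 * ((1 + t\<^sup>2) * RJ + 2 * t * RC)"
        unfolding t_def by (simp add: algebra_simps power2_eq_square)
      have "RC + RJ \<le> (1+t)\<^sup>2 * (RC + RJ)"
      proof -
        have "1 * 1 \<le> (1+t) * (1+t)" by (rule mult_mono) (use t in auto)
        then have "1 \<le> (1+t)\<^sup>2" by (simp add: power2_eq_square)
        then show ?thesis using p0 by (simp add: mult_right_mono[of 1 "(1+t)\<^sup>2" "RC+RJ", simplified])
      qed
      also have "\<dots> \<le> d\<^sup>2 * (RC - RJ)" using e gg by simp
      also have "\<dots> \<le> d\<^sup>2 * ((2 * SA (m1+m2) (C n) + 1) * L)"
        by (rule mult_left_mono) (use bC mJ in \<open>simp_all add: algebra_simps\<close>)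
      finally show ?thesis .
    qed
    have qpw': "RC' + RJ \<le> d\<^sup>2 * ((2 * SA (m1+m2) (C' n) + 1) * L)"
    proof -
      have p0: "0 \<le> RC' + RJ" unfolding RC'_def RJ_def by (rule QP_nonneg[OF dirac_pdj[OF C'] wc])
      have gg: "(1 + t\<^sup>2) * RJ + 2 * t * RC' \<le> 0" using g1' unfolding RC'_def[symmetric] RJ_def[symmetric] zc zIm by simp
      have e: "(1+t)\<^sup>2 * (RC' + RJ) - d\<^sup>2 * (RC' - RJ) = 2 * ((1 + t\<^sup>2) * RJ + 2 * t * RC')"
        unfolding t_def by (simp add: algebra_simps power2_eq_square)
      have "RC' + RJ \<le> (1+t)\<^sup>2 * (RC' + RJ)"
      proof -
        have "1 * 1 \<le> (1+t) * (1+t)" by (rule mult_mono) (use t in auto)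
        then have "1 \<le> (1+t)\<^sup>2" by (simp add: power2_eq_square)
        then show ?thesis using p0 by (simp add: mult_right_mono[of 1 "(1+t)\<^sup>2" "RC'+RJ", simplified])
      qed
      also have "\<dots> \<le> d\<^sup>2 * (RC' - RJ)" using e gg by simp
      also have "\<dots> \<le> d\<^sup>2 * ((2 * SA (m1+m2) (C' n) + 1) * L)"
        by (rule mult_left_mono) (use bC' mJ in \<open>simp_all add: algebra_simps\<close>)
      finally show ?thesis .
    qed
    define u where "u = y - w"
    have uc: "u \<in> carrier_vec (m1+m2)" unfolding u_def using y wc by simp
    have ul: "lown m1 m2 u = 0" by (rule lown_zero) (use wl y wc in \<open>simp add: u_def\<close>)
    have uJ: "Re (ip u (?J *\<^sub>v u)) = Re (ip u u)" using hqJ_split[OF uc] ns_split[OF uc] ul by simp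
    have uG': "ip u (G' *\<^sub>v u) = ip w (G' *\<^sub>v w)" unfolding u_def by (rule ip_hermG[OF G'c G'h y wc G'y])
    have uQ: "Re (ip u (?J *\<^sub>v u)) \<le> Re (ip u (C' n *\<^sub>v u))" by (rule QM_nonneg[OF dirac_pdj[OF C'] uc])
    have nsu: "Re (ip u u) \<le> d\<^sup>2 * ((2 * SA (m1+m2) (C' n) + 1) * L) / 2"
    proof -
      have "Re (ip u (G' *\<^sub>v u)) = RC' + RJ" using uG' Qp'[OF wc] unfolding RC'_def RJ_def by simp
      moreover have "Re (ip u (G' *\<^sub>v u)) = Re (ip u (C' n *\<^sub>v u)) + Re (ip u (?J *\<^sub>v u))" by (rule Qp'[OF uc])
      ultimately show ?thesis using uJ uQ qpw' by linarith
    qed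
    have wu: "w + u = y" unfolding u_def using y wc by (intro eq_vecI) auto
    have pa: "ip y (G *\<^sub>v y) + ip (w - u) (G *\<^sub>v (w - u)) = 2 * ip w (G *\<^sub>v w) + 2 * ip u (G *\<^sub>v u)"
      using para[OF Gc wc uc] unfolding wu .
    have wmu: "w - u \<in> carrier_vec (m1+m2)" using wc uc by simp
    have p1: "0 \<le> Re (ip (w - u) (G *\<^sub>v (w - u)))"
      unfolding Qp[OF wmu] by (rule QP_nonneg[OF dirac_pdj[OF C] wmu])
    have p2: "Re (ip u (G *\<^sub>v u)) \<le> SA (m1+m2) G * Re (ip u u)" using quad_bound[OF Gc uc] by simp
    have p3: "SA (m1+m2) G * Re (ip u u) \<le> SA (m1+m2) G * (d\<^sup>2 * ((2 * SA (m1+m2) (C' n) + 1) * L) / 2)"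
      using nsu SA_nonneg by (rule mult_left_mono)
    have p4: "Re (ip w (G *\<^sub>v w)) = RC + RJ" unfolding Qp[OF wc] RC_def RJ_def ..
    have "Re (ip y (G *\<^sub>v y)) \<le> 2 * (RC + RJ) + 2 * Re (ip u (G *\<^sub>v u))"
      using arg_cong[OF pa, of Re] p1 p4 by simp
    also have "\<dots> \<le> 2 * (d\<^sup>2 * ((2 * SA (m1+m2) (C n) + 1) * L)) + 2 * (SA (m1+m2) G * (d\<^sup>2 * ((2 * SA (m1+m2) (C' n) + 1) * L) / 2))"
      using qpw order_trans[OF p2 p3] by (intro add_mono mult_left_mono) auto
    also have "\<dots> = d\<^sup>2 * K" unfolding K_def by (simp add: algebra_simps)
    finally show ?thesis .
  qed
  have "Re (ip y (G *\<^sub>v y)) \<le> 0" by (rule small_le_zero[OF K0 main])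
  then have "Re (ip y (C n *\<^sub>v y)) + Re (ip y (?J *\<^sub>v y)) \<le> 0" using Qp[OF y] by simp
  then show ?thesis by (rule QP_zero[OF dirac_pdj[OF C] y])
qed

lemma mv_unit: fixes A :: "complex mat" assumes A: "A \<in> carrier_mat n n" and i: "i < n" and j: "j < n"
  shows "(A *\<^sub>v unit_vec n j) $ i = A $$ (i,j)"
proof -
  have "(A *\<^sub>v unit_vec n j) $ i = (\<Sum>b<n. A $$ (i,b) * unit_vec n j $ b)"
    by (rule mv_index[OF A _ i]) simp
  also have "\<dots> = (\<Sum>b<n. if b = j then A $$ (i,j) else 0)"
    by (intro sum.cong) (auto simp: unit_vec_def)
  also have "\<dots> = A $$ (i,j)" using j by simp
  finally show ?thesis .
qed

lemma mat_eq_by_vec: fixes A B :: "complex mat" assumes A: "A \<in> carrier_mat n n" and B: "B \<in> carrier_mat n n"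
  and eq: "\<And>y. y \<in> carrier_vec n \<Longrightarrow> A *\<^sub>v y = B *\<^sub>v y"
  shows "A = B"
proof (rule eq_matI)
  fix i j assume "i < dim_row B" "j < dim_col B"
  then have i: "i < n" and j: "j < n" using B by auto
  show "A $$ (i,j) = B $$ (i,j)"
    using mv_unit[OF A i j] mv_unit[OF B i j] eq[of "unit_vec n j"] by simp
qed (use A B in auto)

lemma V1: fixes a b c :: "complex vec" assumes "a \<in> carrier_vec n" "b \<in> carrier_vec n" "c \<in> carrier_vec n"
  "a + c = 0\<^sub>v n" "b + c = 0\<^sub>v n" shows "a = b"
proof (rule eq_vecI)
  fix i assume "i < dim_vec b" then have i: "i < n" using assms by simp
  have "a $ i + c $ i = 0" using arg_cong[OF assms(4), of "\<lambda>v. v $ i"] assms(1-3) i by simp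
  moreover have "b $ i + c $ i = 0" using arg_cong[OF assms(5), of "\<lambda>v. v $ i"] assms(1-3) i by simp
  ultimately show "a $ i = b $ i" by (metis add_right_cancel)
qed (use assms in simp)

lemma V3: fixes a b :: "complex vec" assumes "a \<in> carrier_vec n" "b \<in> carrier_vec n" shows "(b - a) + (a - b) = 0\<^sub>v n"
  using assms by (intro eq_vecI) auto

lemma V4: fixes x y :: "complex vec" assumes "x \<in> carrier_vec n" "y \<in> carrier_vec n" shows "(x + y) - (x - y) = y + y"
  using assms by (intro eq_vecI) auto

lemma V5: fixes a b :: "complex vec" assumes "a \<in> carrier_vec n" "b \<in> carrier_vec n" shows "a + b = b + a"
  using assms by (intro eq_vecI) auto

lemma V2r: assumes "x \<in> carrier_vec n" "a \<in> carrier_vec n" "c \<in> carrier_vec n" "a + c = 0\<^sub>v n"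
  shows "ip x a = - ip x c"
proof -
  have "ip x a + ip x c = ip x (a + c)" using ip_add_right assms by metis
  also have "\<dots> = 0" using assms ip_zero_right[of x] by simp
  finally show ?thesis by (simp add: eq_neg_iff_add_eq_0)
qed

lemma V2l: assumes "x \<in> carrier_vec n" "a \<in> carrier_vec n" "c \<in> carrier_vec n" "a + c = 0\<^sub>v n"
  shows "ip a x = - ip c x"
proof -
  have "ip a x + ip c x = ip (a + c) x" using ip_add_left assms by metis
  also have "\<dots> = 0" using assms ip_zero_left by simp
  finally show ?thesis by (simp add: eq_neg_iff_add_eq_0)
qed

lemma Vminus0: fixes a b :: "complex vec" assumes "a \<in> carrier_vec n" "b \<in> carrier_vec n" "a - b = 0\<^sub>v n" shows "a = b"
proof (rule eq_vecI)
  fix i assume "i < dim_vec b" then have i: "i < n" using assms by simp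
  have "a $ i - b $ i = 0" using arg_cong[OF assms(3), of "\<lambda>v. v $ i"] assms(1-2) i by simp
  then show "a $ i = b $ i" by simp
qed (use assms in simp)

context
  fixes m1 m2 :: nat and D :: "complex mat"
  assumes D: "pdj m1 m2 D"
begin

lemma NJM: assumes p: "p \<in> carrier_vec (m1+m2)"
  shows "D *\<^sub>v (jmat m1 m2 *\<^sub>v (D *\<^sub>v p - jmat m1 m2 *\<^sub>v p)) + jmat m1 m2 *\<^sub>v (jmat m1 m2 *\<^sub>v (D *\<^sub>v p - jmat m1 m2 *\<^sub>v p)) = 0\<^sub>v (m1+m2)"
proof -
  let ?J = "jmat m1 m2"
  have a: "D *\<^sub>v p \<in> carrier_vec (m1+m2)" by (rule Dv_carrier[OF D])
  have b: "?J *\<^sub>v p \<in> carrier_vec (m1+m2)" by (rule Jv_carrier[OF D])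
  have Ja: "?J *\<^sub>v (D *\<^sub>v p) \<in> carrier_vec (m1+m2)" by (rule Jv_carrier[OF D])
  have Jb: "?J *\<^sub>v (?J *\<^sub>v p) \<in> carrier_vec (m1+m2)" by (rule Jv_carrier[OF D])
  have ab: "D *\<^sub>v p - ?J *\<^sub>v p \<in> carrier_vec (m1+m2)" using a b by simp
  have e0: "?J *\<^sub>v (D *\<^sub>v p - ?J *\<^sub>v p) = ?J *\<^sub>v (D *\<^sub>v p) - p"
    unfolding mult_minus_distrib_mat_vec[OF jmat_carrier a b] jmat_jmat_vec[OF p] ..
  have e1: "D *\<^sub>v (?J *\<^sub>v (D *\<^sub>v p - ?J *\<^sub>v p)) = ?J *\<^sub>v p - D *\<^sub>v p"
    unfolding e0 mult_minus_distrib_mat_vec[OF D_carrier[OF D] Ja p] DJD_vec[OF D p] ..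
  have e2: "?J *\<^sub>v (?J *\<^sub>v (D *\<^sub>v p - ?J *\<^sub>v p)) = D *\<^sub>v p - ?J *\<^sub>v p"
    by (rule jmat_jmat_vec[OF ab])
  show ?thesis unfolding e1 e2 by (rule V3[OF a b])
qed

end

lemma det_ker:
  assumes D: "pdj m1 m2 D" and D': "pdj m1 m2 D'"
    and k1: "\<And>y. y \<in> carrier_vec (m1+m2) \<Longrightarrow> D' *\<^sub>v y + jmat m1 m2 *\<^sub>v y = 0\<^sub>v (m1+m2) \<Longrightarrow> D *\<^sub>v y + jmat m1 m2 *\<^sub>v y = 0\<^sub>v (m1+m2)"
    and k2: "\<And>y. y \<in> carrier_vec (m1+m2) \<Longrightarrow> D *\<^sub>v y + jmat m1 m2 *\<^sub>v y = 0\<^sub>v (m1+m2) \<Longrightarrow> D' *\<^sub>v y + jmat m1 m2 *\<^sub>v y = 0\<^sub>v (m1+m2)"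
  shows "D = D'"
proof (rule mat_eq_by_vec[OF D_carrier[OF D] D_carrier[OF D']])
  let ?J = "jmat m1 m2"
  fix y :: "complex vec" assume y: "y \<in> carrier_vec (m1+m2)"
  have Dc: "D \<in> carrier_mat (m1+m2) (m1+m2)" by (rule D_carrier[OF D])
  have D'c: "D' \<in> carrier_mat (m1+m2) (m1+m2)" by (rule D_carrier[OF D'])
  note J = jmat_carrier[of m1 m2]
  have cv: "\<And>A v. A \<in> carrier_mat (m1+m2) (m1+m2) \<Longrightarrow> A *\<^sub>v v \<in> carrier_vec (m1+m2)" by (rule mv_carrier)
  have Dy: "D *\<^sub>v y \<in> carrier_vec (m1+m2)" by (rule cv[OF Dc])
  have Jy: "?J *\<^sub>v y \<in> carrier_vec (m1+m2)" by (rule cv[OF J])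
  have JDy: "?J *\<^sub>v (D *\<^sub>v y) \<in> carrier_vec (m1+m2)" by (rule cv[OF J])
  define p where "p = ?J *\<^sub>v (D *\<^sub>v y) + y"
  define q where "q = ?J *\<^sub>v (D *\<^sub>v y) - y"
  have pc: "p \<in> carrier_vec (m1+m2)" unfolding p_def using JDy y by simp
  have qc: "q \<in> carrier_vec (m1+m2)" unfolding q_def using JDy y by simp
  have Dq: "D *\<^sub>v q = ?J *\<^sub>v y - D *\<^sub>v y"
    unfolding q_def mult_minus_distrib_mat_vec[OF Dc JDy y] DJD_vec[OF D y] ..
  have Jq: "?J *\<^sub>v q = D *\<^sub>v y - ?J *\<^sub>v y"
    unfolding q_def mult_minus_distrib_mat_vec[OF J JDy y] jmat_jmat_vec[OF Dy] ..
  have Nq: "D *\<^sub>v q + ?J *\<^sub>v q = 0\<^sub>v (m1+m2)"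
    unfolding Dq Jq by (rule V3[OF Dy Jy])
  have N'q: "D' *\<^sub>v q + ?J *\<^sub>v q = 0\<^sub>v (m1+m2)" by (rule k2[OF qc Nq])
  have D'q: "D' *\<^sub>v q = D *\<^sub>v q" by (rule V1[OF cv[OF D'c] cv[OF Dc] cv[OF J] N'q Nq])
  have Dp: "D *\<^sub>v p = ?J *\<^sub>v y + D *\<^sub>v y"
    unfolding p_def mult_add_distrib_mat_vec[OF Dc JDy y] DJD_vec[OF D y] ..
  have Jp: "?J *\<^sub>v p = D *\<^sub>v y + ?J *\<^sub>v y"
    unfolding p_def mult_add_distrib_mat_vec[OF J JDy y] jmat_jmat_vec[OF Dy] ..
  define r where "r = ?J *\<^sub>v (D' *\<^sub>v p - ?J *\<^sub>v p)"
  have rc: "r \<in> carrier_vec (m1+m2)" unfolding r_def by (rule cv[OF J])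
  have N'r: "D' *\<^sub>v r + ?J *\<^sub>v r = 0\<^sub>v (m1+m2)" unfolding r_def by (rule NJM[OF D' pc])
  have Nr: "D *\<^sub>v r + ?J *\<^sub>v r = 0\<^sub>v (m1+m2)" by (rule k1[OF rc N'r])
  have i1: "ip r (?J *\<^sub>v p) = 0"
  proof -
    have "ip r (?J *\<^sub>v p) = ip r (D *\<^sub>v y) + ip r (?J *\<^sub>v y)" unfolding Jp by (rule ip_add_right[OF rc Dy Jy])
    also have "\<dots> = ip (D *\<^sub>v r) y + ip (?J *\<^sub>v r) y" using ipD[OF D rc y] ipJ[OF D rc y] by simp
    also have "\<dots> = ip (D *\<^sub>v r + ?J *\<^sub>v r) y" by (rule ip_add_left[symmetric, OF cv[OF Dc] cv[OF J] y])
    also have "\<dots> = 0" unfolding Nr by (rule ip_zero_left)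
    finally show ?thesis .
  qed
  have D'p: "D' *\<^sub>v p \<in> carrier_vec (m1+m2)" by (rule cv[OF D'c])
  have Jpc: "?J *\<^sub>v p \<in> carrier_vec (m1+m2)" by (rule cv[OF J])
  have Jr: "?J *\<^sub>v r = D' *\<^sub>v p - ?J *\<^sub>v p" unfolding r_def
    by (rule jmat_jmat_vec) (use D'p Jpc in simp)
  have i2: "ip r (?J *\<^sub>v r) = 0"
  proof -
    have "ip r (?J *\<^sub>v r) = ip r (D' *\<^sub>v p) - ip r (?J *\<^sub>v p)" unfolding Jr by (rule ip_minus_right[OF rc D'p Jpc])
    also have "ip r (D' *\<^sub>v p) = ip (D' *\<^sub>v r) p" using ipD[OF D' rc pc] by simp
    also have "\<dots> = - ip (?J *\<^sub>v r) p" by (rule V2l[OF pc cv[OF D'c] cv[OF J] N'r])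
    also have "ip (?J *\<^sub>v r) p = ip r (?J *\<^sub>v p)" by (rule ipJ[OF D rc pc])
    finally show ?thesis using i1 by simp
  qed
  have i3: "ip r (D *\<^sub>v r) = 0" using V2r[OF rc cv[OF Dc] cv[OF J] Nr] i2 by simp
  have r0: "r = 0\<^sub>v (m1+m2)" by (rule D_zero[OF D rc]) (use i3 in simp)
  have "D' *\<^sub>v p - ?J *\<^sub>v p = 0\<^sub>v (m1+m2)" using Jr r0 mv_zero[OF J] by simp
  then have "D' *\<^sub>v p = ?J *\<^sub>v p" by (rule Vminus0[OF D'p Jpc])
  then have D'p_eq: "D' *\<^sub>v p = D *\<^sub>v p" unfolding Jp Dp using V5[OF Dy Jy] by simp
  have pq: "p - q = y + y" unfolding p_def q_def by (rule V4[OF JDy y])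
  have "D' *\<^sub>v (p - q) = D *\<^sub>v (p - q)"
    unfolding mult_minus_distrib_mat_vec[OF D'c pc qc] mult_minus_distrib_mat_vec[OF Dc pc qc] D'q D'p_eq ..
  then have e: "D' *\<^sub>v y + D' *\<^sub>v y = D *\<^sub>v y + D *\<^sub>v y"
    unfolding pq mult_add_distrib_mat_vec[OF D'c y y] mult_add_distrib_mat_vec[OF Dc y y] .
  show "D *\<^sub>v y = D' *\<^sub>v y"
  proof (rule eq_vecI)
    fix i assume "i < dim_vec (D' *\<^sub>v y)" then have i: "i < m1+m2" using D'c by simp
    have "(D' *\<^sub>v y + D' *\<^sub>v y) $ i = (D *\<^sub>v y + D *\<^sub>v y) $ i" using e by simp
    then show "(D *\<^sub>v y) $ i = (D' *\<^sub>v y) $ i" using i Dc D'c by simp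
  qed (use Dc D'c in simp)
qed

theorem theorem2p3:
  fixes m1 m2 :: nat and C C' :: "nat \<Rightarrow> complex mat" and \<phi> :: "complex \<Rightarrow> complex mat"
  assumes "m1 \<noteq> 0" and "m2 \<noteq> 0"
    and "dirac_potential m1 m2 C" and "dirac_potential m1 m2 C'"
    and "is_weyl_function m1 m2 C \<phi>" and "is_weyl_function m1 m2 C' \<phi>"
  shows "C = C'"
proof -
  note C = assms(3) and C' = assms(4) and W = assms(5) and W' = assms(6)
  have "C n = C' n" for n
  proof (induction n rule: less_induct)
    case (less n)
    have agree: "fund_sol m1 m2 C z n = fund_sol m1 m2 C' z n" for z
      by (rule fs_agree) (use less in auto)
    show ?case
    proof (rule det_ker[OF dirac_pdj[OF C] dirac_pdj[OF C']])
      fix y assume "y \<in> carrier_vec (m1+m2)" "C' n *\<^sub>v y + jmat m1 m2 *\<^sub>v y = 0\<^sub>v (m1+m2)"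
      then show "C n *\<^sub>v y + jmat m1 m2 *\<^sub>v y = 0\<^sub>v (m1+m2)"
        by (rule ker_incl[OF C C' W W' agree])
    next
      fix y assume "y \<in> carrier_vec (m1+m2)" "C n *\<^sub>v y + jmat m1 m2 *\<^sub>v y = 0\<^sub>v (m1+m2)"
      then show "C' n *\<^sub>v y + jmat m1 m2 *\<^sub>v y = 0\<^sub>v (m1+m2)"
        by (rule ker_incl[OF C' C W' W agree[symmetric]])
    qed
  qed
  then show ?thesis by auto
qed

end
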